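(* For all integers $n,k\ge1$, there exists a $1$-gap planar graph with treewidth at least $n^{k+1}+1$ and radius at most $(2k+1)n+\lceil k/2\rceil+1$.
   Context: Graphs are finite, simple, undirected. An embedded graph has vertices as distinct points of $\mathbb{R}^2$ and each edge $uv$ as a curve with endpoints $u,v$ containing no vertex in its interior; a crossing is a point common to two edges other than their endpoints. An embedded graph is $1$-gap planar if every crossing can be charged to one of the two edges involved so that at most one crossing is charged to each edge; a graph is $1$-gap planar if it is isomorphic to a $1$-gap planar embedded graph. *)

theory Defs
  imports "HOL-Analysis.Analysis" "HOL-Library.Extended_Nat"
begin

definition sgraph :: "'a set \<Rightarrow> 'a set set \<Rightarrow> bool" where
  "sgraph V E \<longleftrightarrow> finite V \<and> (\<forall>e\<in>E. \<exists>u v. u \<in> V \<and> v \<in> V \<and> u \<noteq> v \<and> e = {u, v})"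

text \<open>A walk is a nonempty vertex list with consecutive vertices adjacent; its length is length xs - 1.\<close>
definition walk :: "'a set \<Rightarrow> 'a set set \<Rightarrow> 'a list \<Rightarrow> bool" where
  "walk V E xs \<longleftrightarrow> xs \<noteq> [] \<and> set xs \<subseteq> V \<and> (\<forall>i. Suc i < length xs \<longrightarrow> {xs ! i, xs ! Suc i} \<in> E)"

definition connected_graph :: "'a set \<Rightarrow> 'a set set \<Rightarrow> bool" where
  "connected_graph V E \<longleftrightarrow> (\<forall>u\<in>V. \<forall>v\<in>V. \<exists>xs. walk V E xs \<and> hd xs = u \<and> last xs = v)"

definition is_tree :: "'a set \<Rightarrow> 'a set set \<Rightarrow> bool" where
  "is_tree N T \<longleftrightarrow> sgraph N T \<and> N \<noteq> {} \<and> connected_graph N T \<and> card T + 1 = card N"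

definition tree_decomposition ::
  "'a set \<Rightarrow> 'a set set \<Rightarrow> nat set \<Rightarrow> nat set set \<Rightarrow> (nat \<Rightarrow> 'a set) \<Rightarrow> bool" where
  "tree_decomposition V E N T B \<longleftrightarrow>
     is_tree N T \<and>
     (\<forall>t\<in>N. B t \<subseteq> V) \<and>
     (\<forall>v\<in>V. \<exists>t\<in>N. v \<in> B t) \<and>
     (\<forall>e\<in>E. \<exists>t\<in>N. e \<subseteq> B t) \<and>
     (\<forall>v\<in>V. connected_graph {t\<in>N. v \<in> B t} {f\<in>T. f \<subseteq> {t\<in>N. v \<in> B t}})"

definition td_width :: "nat set \<Rightarrow> (nat \<Rightarrow> 'a set) \<Rightarrow> nat" where
  "td_width N B = Max ((\<lambda>t. card (B t)) ` N) - 1"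

definition treewidth :: "'a set \<Rightarrow> 'a set set \<Rightarrow> nat" where
  "treewidth V E = Min {w. \<exists>N T B. tree_decomposition V E N T B \<and> w = td_width N B}"

text \<open>Graph distance (infinite if no walk) and radius.\<close>
definition gdist :: "'a set \<Rightarrow> 'a set set \<Rightarrow> 'a \<Rightarrow> 'a \<Rightarrow> enat" where
  "gdist V E u v = (INF xs\<in>{xs. walk V E xs \<and> hd xs = u \<and> last xs = v}. enat (length xs - 1))"

definition graph_radius :: "'a set \<Rightarrow> 'a set set \<Rightarrow> enat" where
  "graph_radius V E = (INF c\<in>V. SUP u\<in>V. gdist V E c u)"

definition embedding :: "'a set \<Rightarrow> 'a set set \<Rightarrow> ('a \<Rightarrow> complex) \<Rightarrow> ('a set \<Rightarrow> real \<Rightarrow> complex) \<Rightarrow> bool" where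
  "embedding V E pos \<gamma> \<longleftrightarrow>
     inj_on pos V \<and>
     (\<forall>e\<in>E. path (\<gamma> e) \<and>
        (\<forall>u v. e = {u, v} \<longrightarrow> {pathstart (\<gamma> e), pathfinish (\<gamma> e)} = {pos u, pos v}) \<and>
        (\<forall>w\<in>V. pos w \<notin> \<gamma> e ` {0<..<1}))"

definition crossings :: "'a set \<Rightarrow> 'a set set \<Rightarrow> ('a \<Rightarrow> complex) \<Rightarrow> ('a set \<Rightarrow> real \<Rightarrow> complex) \<Rightarrow> (complex \<times> 'a set set) set" where
  "crossings V E pos \<gamma> = {(p, {e, f}) | p e f. e \<in> E \<and> f \<in> E \<and> e \<noteq> f \<and>
       p \<in> path_image (\<gamma> e) \<and> p \<in> path_image (\<gamma> f) \<and> p \<notin> pos ` (e \<union> f)}"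

definition one_gap_planar_embedding :: "'a set \<Rightarrow> 'a set set \<Rightarrow> ('a \<Rightarrow> complex) \<Rightarrow> ('a set \<Rightarrow> real \<Rightarrow> complex) \<Rightarrow> bool" where
  "one_gap_planar_embedding V E pos \<gamma> \<longleftrightarrow>
     embedding V E pos \<gamma> \<and>
     (\<exists>ch. (\<forall>c\<in>crossings V E pos \<gamma>. ch c \<in> snd c) \<and>
           (\<forall>g\<in>E. \<forall>c1\<in>crossings V E pos \<gamma>. \<forall>c2\<in>crossings V E pos \<gamma>.
               ch c1 = g \<longrightarrow> ch c2 = g \<longrightarrow> c1 = c2))"

definition one_gap_planar :: "'a set \<Rightarrow> 'a set set \<Rightarrow> bool" where
  "one_gap_planar V E \<longleftrightarrow> (\<exists>pos \<gamma>. one_gap_planar_embedding V E pos \<gamma>)"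

end

theory Submission
  imports Defs
begin


lemma walk_Nil[simp]: "\<not> walk V E []" by (simp add: walk_def)
lemma walk_single[simp]: "walk V E [x] \<longleftrightarrow> x \<in> V" by (simp add: walk_def)
lemma walk_Cons2: "walk V E (x # y # zs) \<longleftrightarrow> x \<in> V \<and> {x,y} \<in> E \<and> walk V E (y # zs)"
proof
  assume w: "walk V E (x # y # zs)"
  have a: "\<forall>i. Suc i < length (x#y#zs) \<longrightarrow> {(x#y#zs) ! i, (x#y#zs) ! Suc i} \<in> E"
    using w unfolding walk_def by blast
  have "{x,y} \<in> E" using a[rule_format, of 0] by simp
  moreover have "\<forall>i. Suc i < length (y#zs) \<longrightarrow> {(y#zs) ! i, (y#zs) ! Suc i} \<in> E"
  proof (intro allI impI)
    fix i assume "Suc i < length (y#zs)"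
    then show "{(y#zs) ! i, (y#zs) ! Suc i} \<in> E" using a[rule_format, of "Suc i"] by simp
  qed
  ultimately show "x \<in> V \<and> {x,y} \<in> E \<and> walk V E (y # zs)" using w unfolding walk_def by auto
next
  assume h: "x \<in> V \<and> {x,y} \<in> E \<and> walk V E (y # zs)"
  have a: "\<forall>i. Suc i < length (y#zs) \<longrightarrow> {(y#zs) ! i, (y#zs) ! Suc i} \<in> E"
    using h unfolding walk_def by blast
  have "\<forall>i. Suc i < length (x#y#zs) \<longrightarrow> {(x#y#zs) ! i, (x#y#zs) ! Suc i} \<in> E"
  proof (intro allI impI)
    fix i assume i: "Suc i < length (x#y#zs)"
    show "{(x#y#zs) ! i, (x#y#zs) ! Suc i} \<in> E"
    proof (cases i)
      case 0 then show ?thesis using h by simp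
    next
      case (Suc j) then show ?thesis using a[rule_format, of j] i by simp
    qed
  qed
  then show "walk V E (x # y # zs)" using h unfolding walk_def by auto
qed

lemma walk_ConsD: "walk V E (x # xs) \<Longrightarrow> xs \<noteq> [] \<Longrightarrow> walk V E xs"
  by (cases xs) (auto simp: walk_Cons2)

lemma walk_append:
  "walk V E xs \<Longrightarrow> walk V E ys \<Longrightarrow> last xs = hd ys \<Longrightarrow> walk V E (xs @ tl ys)"
proof (induction xs)
  case Nil then show ?case by simp
next
  case (Cons x xs)
  show ?case
  proof (cases xs)
    case Nil
    then show ?thesis using Cons by (cases ys) auto
  next
    case (Cons y zs)
    with Cons.prems have "walk V E xs" "x \<in> V" "{x,y} \<in> E" by (auto simp: walk_Cons2)
    then have "walk V E (xs @ tl ys)" using Cons.IH Cons.prems Cons by auto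
    then show ?thesis using \<open>x \<in> V\<close> \<open>{x,y} \<in> E\<close> Cons by (simp add: walk_Cons2)
  qed
qed

lemma walk_hd_in: "walk V E xs \<Longrightarrow> hd xs \<in> V" by (cases xs) (auto simp: walk_def)
lemma walk_last_in: "walk V E xs \<Longrightarrow> last xs \<in> V" by (auto simp: walk_def)

lemma walk_rev: "walk V E xs \<Longrightarrow> walk V E (rev xs)"
proof (induction xs rule: length_induct)
  case (1 xs)
  show ?case
  proof (cases xs)
    case Nil then show ?thesis using 1 by simp
  next
    case (Cons x ys)
    show ?thesis
    proof (cases ys)
      case Nil then show ?thesis using 1 Cons by simp
    next
      case (Cons y zs)
      have w: "x \<in> V" "{x,y} \<in> E" "walk V E ys" using 1(2) \<open>xs = x # ys\<close> Cons by (auto simp: walk_Cons2)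
      have r: "walk V E (rev ys)" using 1(1) w(3) \<open>xs = x # ys\<close> by auto
      have l: "last (rev ys) = y" using Cons by simp
      have "walk V E [y, x]" using w walk_hd_in[OF w(3)] Cons by (simp add: walk_Cons2 insert_commute)
      then have "walk V E (rev ys @ tl [y,x])" using walk_append[OF r, of "[y,x]"] l by simp
      then show ?thesis using \<open>xs = x # ys\<close> by simp
    qed
  qed
qed

lemma walk_mono: "walk V E xs \<Longrightarrow> V \<subseteq> V' \<Longrightarrow> E \<subseteq> E' \<Longrightarrow> walk V' E' xs"
  unfolding walk_def by blast

lemma walk_induced: "walk V E xs \<Longrightarrow> set xs \<subseteq> S \<Longrightarrow> walk S {f\<in>E. f \<subseteq> S} xs"
  unfolding walk_def
proof (intro conjI allI impI)
  fix i assume a: "xs \<noteq> [] \<and> set xs \<subseteq> V \<and> (\<forall>i. Suc i < length xs \<longrightarrow> {xs ! i, xs ! Suc i} \<in> E)"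
    "set xs \<subseteq> S" and i: "Suc i < length xs"
  have "xs ! i \<in> S" "xs ! Suc i \<in> S" using a(2) i by (auto dest: nth_mem)
  then show "{xs ! i, xs ! Suc i} \<in> {f \<in> E. f \<subseteq> S}" using a(1) i by auto
qed auto

lemma walk_set_sub: "walk V E xs \<Longrightarrow> set xs \<subseteq> V" by (simp add: walk_def)

lemma walk_length_append:
  "xs \<noteq> [] \<Longrightarrow> ys \<noteq> [] \<Longrightarrow> length (xs @ tl ys) - 1 = (length xs - 1) + (length ys - 1)"
  by (cases ys) (auto, cases xs, auto)

lemma hd_append_tl: "xs \<noteq> [] \<Longrightarrow> hd (xs @ tl ys) = hd xs" by simp
lemma last_append_tl: "xs \<noteq> [] \<Longrightarrow> ys \<noteq> [] \<Longrightarrow> last xs = hd ys \<Longrightarrow> last (xs @ tl ys) = last ys"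
  by (cases ys) auto

definition reach :: "'a set \<Rightarrow> 'a set set \<Rightarrow> 'a \<Rightarrow> 'a \<Rightarrow> bool" where
  "reach V E u v \<longleftrightarrow> (\<exists>xs. walk V E xs \<and> hd xs = u \<and> last xs = v)"

lemma reach_trans: "reach V E u v \<Longrightarrow> reach V E v w \<Longrightarrow> reach V E u w"
  unfolding reach_def
proof (elim exE conjE)
  fix xs ys assume a: "walk V E xs" "hd xs = u" "last xs = v" "walk V E ys" "hd ys = v" "last ys = w"
  then have "xs \<noteq> []" "ys \<noteq> []" by (auto simp: walk_def)
  then show "\<exists>xs. walk V E xs \<and> hd xs = u \<and> last xs = w"
    using a walk_append[of V E xs ys] last_append_tl[of xs ys] by (intro exI[of _ "xs @ tl ys"]) auto
qed

lemma reach_refl: "u \<in> V \<Longrightarrow> reach V E u u"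
  unfolding reach_def by (intro exI[of _ "[u]"]) simp

lemma reach_sym: "reach V E u v \<Longrightarrow> reach V E v u"
  unfolding reach_def
  by (metis walk_rev hd_rev last_rev)

lemma reach_mono: "reach V E u v \<Longrightarrow> V \<subseteq> V' \<Longrightarrow> E \<subseteq> E' \<Longrightarrow> reach V' E' u v"
  unfolding reach_def using walk_mono by metis

lemma connected_graph_reach: "connected_graph V E \<longleftrightarrow> (\<forall>u\<in>V. \<forall>v\<in>V. reach V E u v)"
  unfolding connected_graph_def reach_def by simp


definition conn :: "'b set \<Rightarrow> 'b set set \<Rightarrow> bool" where
  "conn S T \<longleftrightarrow> connected_graph S {f\<in>T. f \<subseteq> S}"

lemma sgraph_edge: assumes "sgraph N T" "f \<in> T" obtains a b where "a \<in> N" "b \<in> N" "a \<noteq> b" "f = {a,b}"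
  using assms unfolding sgraph_def by meson

lemma edge_card2: assumes "sgraph N T" "f \<in> T" shows "card f = 2" "f \<subseteq> N"
proof -
  obtain a b where "a \<in> N" "b \<in> N" "a \<noteq> b" "f = {a,b}" using sgraph_edge[OF assms] .
  then show "card f = 2" "f \<subseteq> N" by auto
qed

lemma tree_finite_edges: assumes "sgraph N T" shows "finite T"
proof -
  have 1: "T \<subseteq> Pow N" using edge_card2(2)[OF assms] by blast
  have 2: "finite N" using assms unfolding sgraph_def by simp
  show ?thesis by (rule finite_subset[OF 1]) (simp add: 2)
qed

lemma sgraph_finite: "sgraph N T \<Longrightarrow> finite N" unfolding sgraph_def by simp

lemma sgraph_induced_self: "sgraph N T \<Longrightarrow> {f\<in>T. f \<subseteq> N} = T"
  using edge_card2(2) by blast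

lemma handshake:
  assumes "sgraph N T"
  shows "(\<Sum>v\<in>N. card {f\<in>T. v \<in> f}) = 2 * card T"
proof -
  have fT: "finite T" using tree_finite_edges[OF assms] .
  have fN: "finite N" using sgraph_finite[OF assms] .
  have "(\<Sum>v\<in>N. card {f\<in>T. v \<in> f}) = (\<Sum>v\<in>N. \<Sum>f\<in>T. if v \<in> f then 1 else 0)"
  proof (rule sum.cong)
    fix v show "card {f\<in>T. v \<in> f} = (\<Sum>f\<in>T. if v \<in> f then 1 else 0)"
      using sum.inter_filter[OF fT, of "\<lambda>_. 1::nat" "\<lambda>f. v\<in>f"] by simp
  qed simp
  also have "\<dots> = (\<Sum>f\<in>T. \<Sum>v\<in>N. if v \<in> f then 1 else 0)" by (rule sum.swap)
  also have "\<dots> = (\<Sum>f\<in>T. 2)"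
  proof (rule sum.cong)
    fix f assume "f \<in> T"
    then have "card f = 2" "f \<subseteq> N" using edge_card2[OF assms] by auto
    then have "(\<Sum>v\<in>N. if v \<in> f then 1 else 0) = card {v\<in>N. v \<in> f}"
      using sum.inter_filter[OF fN, of "\<lambda>_. 1::nat" "\<lambda>v. v\<in>f"] by simp
    also have "{v\<in>N. v \<in> f} = f" using \<open>f \<subseteq> N\<close> by blast
    finally show "(\<Sum>v\<in>N. if v \<in> f then 1 else 0) = (2::nat)" using \<open>card f = 2\<close> by simp
  qed simp
  finally show ?thesis by simp
qed

lemma tree_leaf:
  assumes t: "is_tree N T" and c: "card N \<ge> 2"
  shows "\<exists>l u. l \<in> N \<and> u \<in> N \<and> l \<noteq> u \<and> {l,u} \<in> T \<and> (\<forall>f\<in>T. l \<in> f \<longrightarrow> f = {l,u})"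
proof -
  have sg: "sgraph N T" and con: "connected_graph N T" and ct: "card T + 1 = card N"
    using t unfolding is_tree_def by auto
  have fN: "finite N" using sgraph_finite[OF sg] .
  have fT: "finite T" using tree_finite_edges[OF sg] .
  have deg1: "card {f\<in>T. v \<in> f} \<ge> 1" if v: "v \<in> N" for v
  proof -
    have "\<exists>w\<in>N. w \<noteq> v"
    proof (rule ccontr)
      assume "\<not> ?thesis" then have "N \<subseteq> {v}" by blast
      then have "card N \<le> 1" using card_mono[of "{v}" N] by (simp add: card_mono)
      then show False using c by simp
    qed
    then obtain w where w: "w \<in> N" "w \<noteq> v" by blast
    then obtain xs where xs: "walk N T xs" "hd xs = v" "last xs = w"
      using con v unfolding connected_graph_def by blast
    then obtain y ys where "xs = v # y # ys"
      using w by (cases xs; cases "tl xs") auto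
    then have "{v,y} \<in> T" using xs walk_Cons2 by metis
    then have "{v,y} \<in> {f\<in>T. v \<in> f}" by simp
    moreover have "finite {f\<in>T. v \<in> f}" using fT by simp
    ultimately show ?thesis by (metis One_nat_def Suc_leI card_gt_0_iff empty_iff)
  qed
  have "\<exists>l\<in>N. card {f\<in>T. l \<in> f} < 2"
  proof (rule ccontr)
    assume "\<not> ?thesis"
    then have "\<forall>v\<in>N. 2 \<le> card {f\<in>T. v \<in> f}" by auto
    then have "(\<Sum>v\<in>N. (2::nat)) \<le> (\<Sum>v\<in>N. card {f\<in>T. v \<in> f})" by (intro sum_mono) auto
    then have "2 * card N \<le> 2 * card T" using handshake[OF sg] by simp
    then show False using ct by simp
  qed
  then obtain l where l: "l \<in> N" "card {f\<in>T. l \<in> f} < 2" by blast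
  then have "card {f\<in>T. l \<in> f} = 1" using deg1[OF l(1)] by simp
  then obtain f0 where f0: "{f\<in>T. l \<in> f} = {f0}" using card_1_singletonE by blast
  then have "f0 \<in> T" "l \<in> f0" by auto
  then obtain a b where ab: "a \<in> N" "b \<in> N" "a \<noteq> b" "f0 = {a,b}" using sgraph_edge[OF sg] by metis
  define u where "u = (if a = l then b else a)"
  have f0u: "f0 = {l,u}" using ab \<open>l \<in> f0\<close> unfolding u_def by auto
  have "u \<in> N" "l \<noteq> u" using ab \<open>l \<in> f0\<close> unfolding u_def by auto
  moreover have "\<forall>f\<in>T. l \<in> f \<longrightarrow> f = {l,u}" using f0 f0u by blast
  ultimately show ?thesis using l(1) \<open>f0 \<in> T\<close> f0u by blast
qed

lemma avoid_leaf_walk: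
  assumes leaf: "\<forall>f\<in>F. l \<in> f \<longrightarrow> f = {l,u}" and lu: "l \<noteq> u"
  shows "walk W F xs \<Longrightarrow> hd xs \<noteq> l \<Longrightarrow> last xs \<noteq> l \<Longrightarrow>
     \<exists>ys. walk (W - {l}) {f\<in>F. l \<notin> f} ys \<and> hd ys = hd xs \<and> last ys = last xs"
proof (induction xs rule: length_induct)
  case (1 xs)
  show ?case
  proof (cases xs)
    case Nil then show ?thesis using 1 by simp
  next
    case (Cons x rest)
    show ?thesis
    proof (cases rest)
      case Nil
      then show ?thesis using 1 Cons by (intro exI[of _ "[x]"]) simp
    next
      case (Cons y zs)
      have w: "x \<in> W" "{x,y} \<in> F" "walk W F (y # zs)"
        using 1(2) \<open>xs = x # rest\<close> Cons by (auto simp: walk_Cons2)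
      have xl: "x \<noteq> l" using 1(3) \<open>xs = x # rest\<close> by simp
      show ?thesis
      proof (cases "y = l")
        case False
        have "last (y # zs) \<noteq> l" using 1(4) \<open>xs = x # rest\<close> Cons by simp
        then obtain ys where ys: "walk (W - {l}) {f\<in>F. l \<notin> f} ys" "hd ys = y" "last ys = last (y#zs)"
          using 1(1)[rule_format, of "y # zs"] w(3) False \<open>xs = x # rest\<close> Cons by auto
        have "ys \<noteq> []" using ys by (auto simp: walk_def)
        then obtain ys' where ys': "ys = y # ys'" using ys(2) by (cases ys) auto
        have "walk (W - {l}) {f\<in>F. l \<notin> f} (x # ys)"
          using ys ys' w xl False by (simp add: walk_Cons2)
        then show ?thesis using ys \<open>xs = x # rest\<close> Cons by (intro exI[of _ "x # ys"]) auto
      next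
        case True
        then have "{x,l} = {l,u}" using leaf w(2) by auto
        then have "x \<in> {l,u}" by blast
        then have "x = u" using xl by blast
        have "zs \<noteq> []" using 1(4) \<open>xs = x # rest\<close> Cons True by auto
        then obtain z zs' where zs: "zs = z # zs'" by (cases zs) auto
        have wz: "{l,z} \<in> F" "walk W F (z # zs')" using w(3) True zs by (auto simp: walk_Cons2)
        then have "{l,z} = {l,u}" using leaf by auto
        then have "u \<in> {l,z}" by blast
        then have "z = u" using lu by blast
        have "last (z # zs') \<noteq> l" "hd (z # zs') \<noteq> l" using 1(4) \<open>xs = x # rest\<close> Cons zs \<open>z = u\<close> lu by auto
        then obtain ys where ys: "walk (W - {l}) {f\<in>F. l \<notin> f} ys" "hd ys = z" "last ys = last (z#zs')"
          using 1(1)[rule_format, of "z # zs'"] wz(2) \<open>xs = x # rest\<close> Cons zs by auto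
        then show ?thesis using \<open>xs = x # rest\<close> Cons zs \<open>z = u\<close> \<open>x = u\<close> by (intro exI[of _ ys]) auto
      qed
    qed
  qed
qed

lemma conn_remove_leaf:
  assumes leaf: "\<forall>f\<in>T. l \<in> f \<longrightarrow> f = {l,u}" and lu: "l \<noteq> u"
    and c: "conn S T" and lS: "l \<in> S" and ne: "S \<noteq> {l}"
  shows "u \<in> S" "conn (S - {l}) (T - {{l,u}})"
proof -
  obtain x where x: "x \<in> S" "x \<noteq> l" using lS ne by blast
  obtain xs where xs: "walk S {f\<in>T. f \<subseteq> S} xs" "hd xs = l" "last xs = x"
    using c lS x unfolding conn_def connected_graph_def by blast
  then obtain y ys where "xs = l # y # ys" using x by (cases xs; cases "tl xs") auto
  then have "{l,y} \<in> {f\<in>T. f \<subseteq> S}" using xs walk_Cons2 by metis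
  then have "{l,y} = {l,u}" "y \<in> S" using leaf by auto
  then have "u \<in> {l,y}" by blast
  then show "u \<in> S" using lu \<open>y \<in> S\<close> by blast
  show "conn (S - {l}) (T - {{l,u}})"
    unfolding conn_def connected_graph_def
  proof (intro ballI)
    fix a b assume a: "a \<in> S - {l}" and b: "b \<in> S - {l}"
    obtain zs where zs: "walk S {f\<in>T. f \<subseteq> S} zs" "hd zs = a" "last zs = b"
      using c a b unfolding conn_def connected_graph_def by blast
    have leaf': "\<forall>f\<in>{f\<in>T. f \<subseteq> S}. l \<in> f \<longrightarrow> f = {l,u}" using leaf by blast
    obtain ws where ws: "walk (S - {l}) {f\<in>{f\<in>T. f \<subseteq> S}. l \<notin> f} ws" "hd ws = a" "last ws = b"
      using avoid_leaf_walk[OF leaf' lu zs(1)] zs a b by auto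
    have "{f\<in>{f\<in>T. f \<subseteq> S}. l \<notin> f} \<subseteq> {f \<in> T - {{l, u}}. f \<subseteq> S - {l}}" by auto
    then have "walk (S - {l}) {f \<in> T - {{l, u}}. f \<subseteq> S - {l}} ws" using walk_mono[OF ws(1)] by blast
    then show "\<exists>xs. walk (S - {l}) {f \<in> T - {{l, u}}. f \<subseteq> S - {l}} xs \<and> hd xs = a \<and> last xs = b"
      using ws by blast
  qed
qed

lemma conn_no_leaf:
  assumes "conn S T" "l \<notin> S"
  shows "conn S (T - {{l,u}})"
proof -
  have "{f\<in>T - {{l,u}}. f \<subseteq> S} = {f\<in>T. f \<subseteq> S}" using assms(2) by auto
  then show ?thesis using assms(1) unfolding conn_def by simp
qed

lemma tree_conn_self: "is_tree N T \<Longrightarrow> conn N T"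
proof -
  assume "is_tree N T"
  then have "{f\<in>T. f \<subseteq> N} = T" "connected_graph N T"
    unfolding is_tree_def using sgraph_induced_self by auto
  then show "conn N T" unfolding conn_def by simp
qed

lemma tree_remove_leaf:
  assumes t: "is_tree N T" and c: "card N \<ge> 2" and l: "l \<in> N" "u \<in> N" "l \<noteq> u" "{l,u} \<in> T"
    and leaf: "\<forall>f\<in>T. l \<in> f \<longrightarrow> f = {l,u}"
  shows "is_tree (N - {l}) (T - {{l,u}})"
proof -
  have sg: "sgraph N T" and ct: "card T + 1 = card N" using t unfolding is_tree_def by auto
  have fN: "finite N" using sgraph_finite[OF sg] .
  have fT: "finite T" using tree_finite_edges[OF sg] .
  have sg': "sgraph (N - {l}) (T - {{l,u}})"
    unfolding sgraph_def
  proof (intro conjI ballI)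
    show "finite (N - {l})" using fN by simp
    fix e assume e: "e \<in> T - {{l,u}}"
    then obtain a b where "a \<in> N" "b \<in> N" "a \<noteq> b" "e = {a,b}" using sgraph_edge[OF sg] by (metis DiffD1)
    moreover have "l \<notin> e" using e leaf by blast
    ultimately show "\<exists>a b. a \<in> N - {l} \<and> b \<in> N - {l} \<and> a \<noteq> b \<and> e = {a, b}" by blast
  qed
  have ne: "N \<noteq> {l}" using c by auto
  have cc: "conn (N - {l}) (T - {{l,u}})" using conn_remove_leaf(2)[OF leaf l(3) tree_conn_self[OF t] l(1) ne] .
  have "{f \<in> T - {{l,u}}. f \<subseteq> N - {l}} = T - {{l,u}}" using sgraph_induced_self[OF sg'] by auto
  then have "connected_graph (N - {l}) (T - {{l,u}})" using cc unfolding conn_def by simp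
  moreover have "N - {l} \<noteq> {}" using ne l(1) by blast
  moreover have "card (T - {{l,u}}) + 1 = card (N - {l})"
    using ct l fN fT card_gt_0_iff[of T] by (auto simp: card_Diff_singleton)
  ultimately show ?thesis using sg' unfolding is_tree_def by blast
qed

lemma helly:
  "is_tree N T \<Longrightarrow> (\<forall>S\<in>F. S \<subseteq> N \<and> S \<noteq> {} \<and> conn S T) \<Longrightarrow> (\<forall>S1\<in>F. \<forall>S2\<in>F. S1 \<inter> S2 \<noteq> {})
   \<Longrightarrow> \<exists>t\<in>N. \<forall>S\<in>F. t \<in> S"
proof (induction "card N" arbitrary: N T F rule: less_induct)
  case less
  have fN: "finite N" "N \<noteq> {}" using less.prems(1) sgraph_finite unfolding is_tree_def by auto
  show ?case
  proof (cases "card N \<ge> 2")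
    case False
    then have "card N = 1" using fN using card_gt_0_iff[of N] by linarith
    then obtain t where "N = {t}" using card_1_singletonE by blast
    then show ?thesis using less.prems(2) by blast
  next
    case True
    obtain l u where lu: "l \<in> N" "u \<in> N" "l \<noteq> u" "{l,u} \<in> T" "\<forall>f\<in>T. l \<in> f \<longrightarrow> f = {l,u}"
      using tree_leaf[OF less.prems(1) True] by blast
    show ?thesis
    proof (cases "{l} \<in> F")
      case True
      then show ?thesis using less.prems(3) lu(1) by blast
    next
      case False
      define F' where "F' = (\<lambda>S. S - {l}) ` F"
      have t': "is_tree (N - {l}) (T - {{l,u}})" using tree_remove_leaf[OF less.prems(1) True lu] .
      have cl: "card (N - {l}) < card N" by (rule card_Diff1_less[OF fN(1) lu(1)])
      have P: "S - {l} \<subseteq> N - {l} \<and> S - {l} \<noteq> {} \<and> conn (S - {l}) (T - {{l,u}})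
               \<and> (l \<in> S \<longrightarrow> u \<in> S)" if S: "S \<in> F" for S
      proof (cases "l \<in> S")
        case True
        have ne: "S \<noteq> {l}" using False S by blast
        have c: "conn S T" using less.prems(2) S by blast
        have "u \<in> S" using conn_remove_leaf(1)[OF lu(5) lu(3) c True ne] .
        moreover have "conn (S - {l}) (T - {{l,u}})" using conn_remove_leaf(2)[OF lu(5) lu(3) c True ne] .
        ultimately show ?thesis using less.prems(2) S lu(3) by blast
      next
        case False
        then show ?thesis using less.prems(2) S conn_no_leaf[of S T l u] by auto
      qed
      have "\<exists>t\<in>N - {l}. \<forall>S\<in>F'. t \<in> S"
      proof (rule less.hyps[OF cl t'])
        show "\<forall>S\<in>F'. S \<subseteq> N - {l} \<and> S \<noteq> {} \<and> conn S (T - {{l, u}})" using P unfolding F'_def by blast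
        show "\<forall>S1\<in>F'. \<forall>S2\<in>F'. S1 \<inter> S2 \<noteq> {}"
          unfolding F'_def
        proof (intro ballI)
          fix S1 S2 assume "S1 \<in> (\<lambda>S. S - {l}) ` F" "S2 \<in> (\<lambda>S. S - {l}) ` F"
          then obtain A1 A2 where A: "A1 \<in> F" "A2 \<in> F" "S1 = A1 - {l}" "S2 = A2 - {l}" by blast
          obtain x where x: "x \<in> A1" "x \<in> A2" using less.prems(3) A by blast
          show "S1 \<inter> S2 \<noteq> {}"
          proof (cases "x = l")
            case True
            then have "u \<in> A1" "u \<in> A2" using P A x by blast+
            then show ?thesis using A lu(3) by blast
          next
            case False then show ?thesis using A x by blast
          qed
        qed
      qed
      then obtain t where "t \<in> N - {l}" "\<forall>S\<in>F'. t \<in> S" by blast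
      then show ?thesis unfolding F'_def by blast
    qed
  qed
qed


definition wconn :: "'a set \<Rightarrow> 'a set set \<Rightarrow> 'a set \<Rightarrow> bool" where
  "wconn V E X \<longleftrightarrow> (\<forall>u\<in>X. \<forall>v\<in>X. \<exists>xs. walk V E xs \<and> set xs \<subseteq> X \<and> hd xs = u \<and> last xs = v)"

lemma td_tree: "tree_decomposition V E N T B \<Longrightarrow> is_tree N T"
  unfolding tree_decomposition_def by (elim conjE)
lemma td_bag: "tree_decomposition V E N T B \<Longrightarrow> t \<in> N \<Longrightarrow> B t \<subseteq> V"
  unfolding tree_decomposition_def by (elim conjE) (erule bspec)
lemma td_cover: "tree_decomposition V E N T B \<Longrightarrow> v \<in> V \<Longrightarrow> \<exists>t\<in>N. v \<in> B t"
  unfolding tree_decomposition_def by (elim conjE) (erule bspec)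
lemma td_edge: "tree_decomposition V E N T B \<Longrightarrow> e \<in> E \<Longrightarrow> \<exists>t\<in>N. e \<subseteq> B t"
  unfolding tree_decomposition_def by (elim conjE) (erule bspec)
lemma td_sub: "tree_decomposition V E N T B \<Longrightarrow> v \<in> V \<Longrightarrow>
    connected_graph {t\<in>N. v \<in> B t} {f\<in>T. f \<subseteq> {t\<in>N. v \<in> B t}}"
  unfolding tree_decomposition_def by (elim conjE) (erule bspec)
lemma tree_fin: "is_tree N T \<Longrightarrow> finite N \<and> N \<noteq> {}"
  unfolding is_tree_def using sgraph_finite by blast

lemma td_sub_conn:
  assumes td: "tree_decomposition V E N T B"
  shows "walk V E xs \<Longrightarrow> set xs \<subseteq> X \<Longrightarrow> t1 \<in> N \<Longrightarrow> hd xs \<in> B t1 \<Longrightarrow> t2 \<in> N \<Longrightarrow> last xs \<in> B t2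
    \<Longrightarrow> reach {t\<in>N. B t \<inter> X \<noteq> {}} {f\<in>T. f \<subseteq> {t\<in>N. B t \<inter> X \<noteq> {}}} t1 t2"
proof (induction xs arbitrary: t1)
  case Nil then show ?case by simp
next
  case (Cons x rest)
  let ?SX = "{t\<in>N. B t \<inter> X \<noteq> {}}"
  have xV: "x \<in> V" using Cons.prems(1) by (simp add: walk_def)
  have sub: "\<And>t0. t0 \<in> N \<Longrightarrow> x \<in> B t0 \<Longrightarrow> reach ?SX {f\<in>T. f \<subseteq> ?SX} t1 t0"
  proof -
    fix t0 assume t0: "t0 \<in> N" "x \<in> B t0"
    have cg: "connected_graph {t\<in>N. x \<in> B t} {f\<in>T. f \<subseteq> {t\<in>N. x \<in> B t}}"
      using td_sub[OF td xV] .
    have "reach {t\<in>N. x \<in> B t} {f\<in>T. f \<subseteq> {t\<in>N. x \<in> B t}} t1 t0"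
      using cg t0 Cons.prems(3,4) unfolding connected_graph_reach by simp
    moreover have "{t\<in>N. x \<in> B t} \<subseteq> ?SX" using Cons.prems(2) by auto
    ultimately show "reach ?SX {f\<in>T. f \<subseteq> ?SX} t1 t0"
      by (rule reach_mono) (use Cons.prems(2) in auto)
  qed
  show ?case
  proof (cases rest)
    case Nil
    then show ?thesis using sub Cons.prems by simp
  next
    case (Cons y zs)
    have e: "{x,y} \<in> E" and w: "walk V E rest" using Cons.prems(1) \<open>rest = y # zs\<close> by (auto simp: walk_Cons2)
    obtain t0 where t0: "t0 \<in> N" "{x,y} \<subseteq> B t0" using td_edge[OF td e] by blast
    have "reach ?SX {f\<in>T. f \<subseteq> ?SX} t1 t0" using sub t0 by auto
    moreover have "reach ?SX {f\<in>T. f \<subseteq> ?SX} t0 t2"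
      using Cons.IH[OF w _ t0(1)] Cons.prems t0 \<open>rest = y # zs\<close> by auto
    ultimately show ?thesis by (rule reach_trans)
  qed
qed

lemma td_cross_conn:
  assumes td: "tree_decomposition V E N T B" and X: "wconn V E X"
  shows "conn {t\<in>N. B t \<inter> X \<noteq> {}} T"
  unfolding conn_def connected_graph_reach
proof (intro ballI)
  fix t1 t2 assume t1: "t1 \<in> {t\<in>N. B t \<inter> X \<noteq> {}}" and t2: "t2 \<in> {t\<in>N. B t \<inter> X \<noteq> {}}"
  obtain x1 where x1: "x1 \<in> B t1" "x1 \<in> X" using t1 by blast
  obtain x2 where x2: "x2 \<in> B t2" "x2 \<in> X" using t2 by blast
  obtain xs where xs: "walk V E xs" "set xs \<subseteq> X" "hd xs = x1" "last xs = x2"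
    using X x1 x2 unfolding wconn_def by blast
  show "reach {t\<in>N. B t \<inter> X \<noteq> {}} {f\<in>T. f \<subseteq> {t\<in>N. B t \<inter> X \<noteq> {}}} t1 t2"
    using td_sub_conn[OF td xs(1,2)] t1 t2 xs x1 x2 by auto
qed

lemma tw_lower_bag:
  fixes R C :: "nat \<Rightarrow> 'a set"
  assumes td: "tree_decomposition V E N T B" and fin: "finite V"
    and RC: "\<forall>i<M. \<forall>j<M. R i \<inter> C j \<noteq> {}"
    and Rd: "\<forall>i<M. \<forall>j<M. i \<noteq> j \<longrightarrow> R i \<inter> R j = {}"
    and Cd: "\<forall>i<M. \<forall>j<M. i \<noteq> j \<longrightarrow> C i \<inter> C j = {}"
    and cx: "\<forall>i<M. \<forall>j<M. wconn V E (R i \<union> C j)"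
    and sub: "\<forall>i<M. R i \<subseteq> V \<and> C i \<subseteq> V"
  shows "\<exists>t\<in>N. M \<le> card (B t)"
proof -
  have tr: "is_tree N T" using td_tree[OF td] .
  define F where "F = {{t\<in>N. B t \<inter> (R i \<union> C j) \<noteq> {}} | i j. i < M \<and> j < M}"
  have cover: "\<exists>t\<in>N. v \<in> B t" if "v \<in> V" for v using td_cover[OF td that] .
  have "\<exists>t\<in>N. \<forall>S\<in>F. t \<in> S"
  proof (rule helly[OF tr])
    show "\<forall>S\<in>F. S \<subseteq> N \<and> S \<noteq> {} \<and> conn S T"
    proof
      fix S assume "S \<in> F"
      then obtain i j where ij: "i < M" "j < M" "S = {t\<in>N. B t \<inter> (R i \<union> C j) \<noteq> {}}" using \<open>S \<in> F\<close> unfolding F_def by auto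
      obtain v where v: "v \<in> R i" "v \<in> C j" using RC ij by blast
      then have "v \<in> V" using sub ij by blast
      then obtain t where "t \<in> N" "v \<in> B t" using cover by blast
      then have "S \<noteq> {}" using ij v by auto
      moreover have "conn S T" using td_cross_conn[OF td] cx ij by simp
      ultimately show "S \<subseteq> N \<and> S \<noteq> {} \<and> conn S T" using ij by auto
    qed
    show "\<forall>S1\<in>F. \<forall>S2\<in>F. S1 \<inter> S2 \<noteq> {}"
    proof (intro ballI)
      fix S1 S2 assume "S1 \<in> F" "S2 \<in> F"
      then obtain i j i' j' where ij: "i < M" "j < M" "S1 = {t\<in>N. B t \<inter> (R i \<union> C j) \<noteq> {}}"
        "i' < M" "j' < M" "S2 = {t\<in>N. B t \<inter> (R i' \<union> C j') \<noteq> {}}" using \<open>S1 \<in> F\<close> \<open>S2 \<in> F\<close> unfolding F_def by auto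
      obtain v where v: "v \<in> R i" "v \<in> C j'" using RC ij by blast
      then have "v \<in> V" using sub ij by blast
      then obtain t where "t \<in> N" "v \<in> B t" using cover by blast
      then show "S1 \<inter> S2 \<noteq> {}" using ij v by auto
    qed
  qed
  then obtain t where t: "t \<in> N" "\<forall>S\<in>F. t \<in> S" by blast
  have hit: "B t \<inter> (R i \<union> C j) \<noteq> {}" if "i < M" "j < M" for i j
  proof -
    have m: "{t'\<in>N. B t' \<inter> (R i \<union> C j) \<noteq> {}} \<in> F" unfolding F_def using that by auto
    have "t \<in> {t'\<in>N. B t' \<inter> (R i \<union> C j) \<noteq> {}}" using t(2) m by (rule bspec)
    then show ?thesis by simp
  qed
  have Bfin: "finite (B t)" using td_bag[OF td t(1)] fin by (rule finite_subset)
  have "(\<forall>i<M. B t \<inter> R i \<noteq> {}) \<or> (\<forall>j<M. B t \<inter> C j \<noteq> {})"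
  proof (rule ccontr)
    assume "\<not> ?thesis"
    then obtain i j where "i < M" "j < M" "B t \<inter> R i = {}" "B t \<inter> C j = {}" by blast
    then show False using hit by blast
  qed
  then show ?thesis
  proof
    assume a: "\<forall>i<M. B t \<inter> R i \<noteq> {}"
    define f where "f i = (SOME v. v \<in> B t \<inter> R i)" for i
    have f: "f i \<in> B t \<inter> R i" if "i < M" for i
    proof -
      have "\<exists>v. v \<in> B t \<inter> R i" using a that by blast
      then show ?thesis unfolding f_def by (rule someI_ex)
    qed
    have "inj_on f {..<M}"
    proof (rule inj_onI)
      fix i j assume "i \<in> {..<M}" "j \<in> {..<M}" "f i = f j"
      show "i = j"
      proof (rule ccontr)
        assume "i \<noteq> j"
        then have "R i \<inter> R j = {}" using Rd \<open>i \<in> {..<M}\<close> \<open>j \<in> {..<M}\<close> by auto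
        moreover have "f i \<in> R i" "f j \<in> R j" using f \<open>i \<in> {..<M}\<close> \<open>j \<in> {..<M}\<close> by auto
        ultimately show False using \<open>f i = f j\<close> by auto
      qed
    qed
    moreover have "f ` {..<M} \<subseteq> B t" using f by blast
    ultimately have "card {..<M} \<le> card (B t)" using card_inj_on_le Bfin by blast
    then show ?thesis using t by auto
  next
    assume a: "\<forall>i<M. B t \<inter> C i \<noteq> {}"
    define f where "f i = (SOME v. v \<in> B t \<inter> C i)" for i
    have f: "f i \<in> B t \<inter> C i" if "i < M" for i
    proof -
      have "\<exists>v. v \<in> B t \<inter> C i" using a that by blast
      then show ?thesis unfolding f_def by (rule someI_ex)
    qed
    have "inj_on f {..<M}"
    proof (rule inj_onI)
      fix i j assume "i \<in> {..<M}" "j \<in> {..<M}" "f i = f j"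
      show "i = j"
      proof (rule ccontr)
        assume "i \<noteq> j"
        then have "C i \<inter> C j = {}" using Cd \<open>i \<in> {..<M}\<close> \<open>j \<in> {..<M}\<close> by auto
        moreover have "f i \<in> C i" "f j \<in> C j" using f \<open>i \<in> {..<M}\<close> \<open>j \<in> {..<M}\<close> by auto
        ultimately show False using \<open>f i = f j\<close> by auto
      qed
    qed
    moreover have "f ` {..<M} \<subseteq> B t" using f by blast
    ultimately have "card {..<M} \<le> card (B t)" using card_inj_on_le Bfin by blast
    then show ?thesis using t by auto
  qed
qed

lemma trivial_td:
  assumes "sgraph V E"
  shows "tree_decomposition V E {0} {} (\<lambda>_. V)"
proof -
  have "sgraph {0::nat} {}" unfolding sgraph_def by simp
  moreover have "connected_graph {0::nat} {}" unfolding connected_graph_def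
    by (auto intro!: exI[of _ "[0]"])
  ultimately have "is_tree {0::nat} {}" unfolding is_tree_def by simp
  moreover have "\<forall>e\<in>E. e \<subseteq> V" using edge_card2(2)[OF assms] by blast
  moreover have "connected_graph {t\<in>{0::nat}. v \<in> V} {f\<in>{}. f \<subseteq> {t\<in>{0::nat}. v \<in> V}}" if "v \<in> V" for v
    using that \<open>connected_graph {0::nat} {}\<close> by simp
  ultimately show ?thesis unfolding tree_decomposition_def by auto
qed

lemma treewidth_lower:
  fixes R C :: "nat \<Rightarrow> 'a set"
  assumes sg: "sgraph V E"
    and RC: "\<forall>i<M. \<forall>j<M. R i \<inter> C j \<noteq> {}"
    and Rd: "\<forall>i<M. \<forall>j<M. i \<noteq> j \<longrightarrow> R i \<inter> R j = {}"
    and Cd: "\<forall>i<M. \<forall>j<M. i \<noteq> j \<longrightarrow> C i \<inter> C j = {}"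
    and cx: "\<forall>i<M. \<forall>j<M. wconn V E (R i \<union> C j)"
    and sub: "\<forall>i<M. R i \<subseteq> V \<and> C i \<subseteq> V"
  shows "M - 1 \<le> treewidth V E"
proof -
  have fin: "finite V" using sgraph_finite[OF sg] .
  let ?W = "{w. \<exists>N T B. tree_decomposition V E N T B \<and> w = td_width N B}"
  have ne: "?W \<noteq> {}" using trivial_td[OF sg] by blast
  have bd: "?W \<subseteq> {..card V}"
  proof
    fix w assume "w \<in> ?W"
    then obtain N T B where td: "tree_decomposition V E N T B" and w: "w = td_width N B" by blast
    have fN: "finite N" "N \<noteq> {}" using tree_fin[OF td_tree[OF td]] by auto
    have "\<forall>t\<in>N. card (B t) \<le> card V" using td_bag[OF td] fin by (simp add: card_mono)
    then have "Max ((\<lambda>t. card (B t)) ` N) \<le> card V" using fN by auto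
    then show "w \<in> {..card V}" using w unfolding td_width_def by auto
  qed
  have finW: "finite ?W" using bd finite_subset by blast
  have "treewidth V E \<in> ?W" unfolding treewidth_def using Min_in[OF finW ne] by simp
  then obtain N T B where td: "tree_decomposition V E N T B" and w: "treewidth V E = td_width N B" by blast
  have fN: "finite N" using tree_fin[OF td_tree[OF td]] by auto
  obtain t where t: "t \<in> N" "M \<le> card (B t)" using tw_lower_bag[OF td fin RC Rd Cd cx sub] by blast
  have "card (B t) \<le> Max ((\<lambda>t. card (B t)) ` N)" using fN t by auto
  then show ?thesis using w t unfolding td_width_def by linarith
qed


lemma nt_no_mult_between:
  fixes u t x :: nat
  assumes "2^u * t < x" "x < 2^u * (t+1)"
  shows "\<not> (2::nat)^u dvd x"
proof
  assume "(2::nat)^u dvd x"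
  then obtain c where c: "x = 2^u * c" by blast
  have "t < c" using assms(1) c by (metis mult_less_cancel1)
  moreover have "c < t + 1" using assms(2) c by (metis mult_less_cancel1)
  ultimately show False by simp
qed

lemma nt_between_dvd:
  fixes u t x :: nat
  assumes "2^u * t \<le> x" "x \<le> 2^u * (t+1)" "(2::nat)^u dvd x"
  shows "x = 2^u * t \<or> x = 2^u * (t+1)"
  using nt_no_mult_between[of u t x] assms by linarith

lemma nt_val_unique:
  fixes a b i j :: nat
  shows "2^a * (2*i+1) = 2^b * (2*j+1) \<Longrightarrow> a = b \<and> i = j"
proof (induction a arbitrary: b)
  case 0
  then show ?case
  proof (cases b)
    case 0 then show ?thesis using "0.prems" by simp
  next
    case (Suc b')
    have eq: "2*i+1 = 2^b*(2*j+1)" using "0.prems" by simp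
    have "even ((2::nat)^b * (2*j+1))" using Suc by simp
    then have "even (2*i+1)" using eq by simp
    then show ?thesis by simp
  qed
next
  case (Suc a)
  show ?case
  proof (cases b)
    case 0
    have eq: "2^Suc a * (2*i+1) = 2*j+1" using Suc.prems 0 by (simp only: power_0 mult_1)
    have "even ((2::nat)^Suc a * (2*i+1))" by simp
    then have "even (2*j+1)" unfolding eq .
    then show ?thesis by simp
  next
    case (Suc b')
    then have "2^a * (2*i+1) = 2^b' * (2*j+1)" using Suc.prems[unfolded Suc] by simp
    then show ?thesis using Suc.IH Suc by simp
  qed
qed

lemma nt_pow_dvd_odd:
  fixes u a i :: nat
  assumes "(2::nat)^u dvd 2^a * (2*i+1)"
  shows "u \<le> a"
proof (rule ccontr)
  assume "\<not> u \<le> a"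
  then have "Suc a \<le> u" by simp
  then have "(2::nat)^(Suc a) dvd 2^u" by (rule le_imp_power_dvd)
  then have "(2::nat)^(Suc a) dvd 2^a * (2*i+1)" using assms dvd_trans by blast
  then have "2^a * 2 dvd 2^a * (2*i+1)" by (simp add: mult.commute)
  then have "2 dvd (2*i+1)" using nat_mult_dvd_cancel_disj[of "2^a" 2 "2*i+1"] by simp
  then show False by simp
qed

definition isNode :: "nat \<times> nat \<Rightarrow> bool" where
  "isNode c \<longleftrightarrow> (\<exists>v p q. c = (2^v *(2*p+1), 2^v *(2*q+1))) \<or>
     (\<exists>v p q i. (i = 1 \<or> i = 3) \<and> c = (2^v *(4*p+i), 2^v *(4*q+2)))"

lemma four_form: assumes "(i::nat) = 1 \<or> i = 3" shows "\<exists>p'. 4*p+i = 2*p'+1"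
proof (cases "i = 1")
  case True then show ?thesis by (intro exI[of _ "2*p"]) simp
next
  case False then have "i = 3" using assms by simp
  then show ?thesis by (intro exI[of _ "2*p+1"]) simp
qed

lemma four2: "2^u*(4*q+2) = (2::nat)^(Suc u)*(2*q+1)" by simp

lemma nt_hh_interior:
  assumes "2^u * t < x" "x < 2^u * (t+1)" "isNode (x, 2^u*(4*q+2))"
  shows False
proof -
  have nd: "\<not> (2::nat)^u dvd x" using nt_no_mult_between assms(1,2) by blast
  from assms(3) show False unfolding isNode_def
  proof (elim disjE[of "\<exists>v p q. _ v p q"] exE conjE)
    fix v p q' assume "(x, 2^u*(4*q+2)) = (2^v *(2*p+1), 2^v *(2*q'+1))"
    then have x: "x = 2^v *(2*p+1)" and y: "2^Suc u*(2*q+1) = 2^v *(2*q'+1)" by (auto simp: four2)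
    then have "v = Suc u" using nt_val_unique by blast
    then have "(2::nat)^u dvd x" using x by simp
    then show False using nd by blast
  next
    fix v p q' i assume "(x, 2^u*(4*q+2)) = (2^v *(4*p+i), 2^v *(4*q'+2))" "i = 1 \<or> i = 3"
    then have x: "x = 2^v *(4*p+i)" and y: "2^Suc u*(2*q+1) = 2^Suc v *(2*q'+1)" by (auto simp: four2)
    then have "v = u" using nt_val_unique by blast
    then have "(2::nat)^u dvd x" using x by simp
    then show False using nd by blast
  qed
qed

lemma nt_hv_interior:
  assumes "2^u * s < y" "y < 2^u * (s+1)" "isNode (2^u*(2*p+1), y)"
  shows False
proof -
  have nd: "\<not> (2::nat)^u dvd y" using nt_no_mult_between assms(1,2) by blast
  from assms(3) show False unfolding isNode_def
  proof (elim disjE[of "\<exists>v p q. _ v p q"] exE conjE)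
    fix v p' q' assume "(2^u*(2*p+1), y) = (2^v *(2*p'+1), 2^v *(2*q'+1))"
    then have y: "y = 2^v *(2*q'+1)" and x: "2^u*(2*p+1) = 2^v *(2*p'+1)" by auto
    then have "v = u" using nt_val_unique by metis
    then have "(2::nat)^u dvd y" using y by simp
    then show False using nd by blast
  next
    fix v p' q' i assume a: "(2^u*(2*p+1), y) = (2^v *(4*p'+i), 2^v *(4*q'+2))" "i = 1 \<or> i = 3"
    obtain p'' where p'': "4*p'+i = 2*p''+1" using four_form[OF a(2)] by blast
    have y: "y = 2^v *(4*q'+2)" and x: "2^u*(2*p+1) = 2^v *(2*p''+1)" using a(1) p'' by auto
    then have "v = u" using nt_val_unique by metis
    then have "(2::nat)^u dvd y" using y by simp
    then show False using nd by blast
  qed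
qed

lemma nt_hh_hv:
  fixes a b w p u q t s :: nat
  assumes a: "a = 2^w*(2*p+1)" and b: "b = 2^u*(4*q+2)"
    and ia: "2^u*t \<le> a" "a \<le> 2^u*(t+1)" and ib: "2^w* s \<le> b" "b \<le> 2^w*(s+1)"
    and s: "s mod 4 = 1 \<or> s mod 4 = 2"
  shows "a = 2^u*t \<or> a = 2^u*(t+1)"
proof (rule ccontr)
  assume "\<not> ?thesis"
  then have "2^u*t < a" "a < 2^u*(t+1)" using ia by auto
  then have nd: "\<not> (2::nat)^u dvd a" using nt_no_mult_between by blast
  have "w < u"
  proof (rule ccontr)
    assume "\<not> w < u"
    then have "(2::nat)^u dvd 2^w" by (simp add: le_imp_power_dvd)
    then have "(2::nat)^u dvd a" using a by (simp add: dvd_mult2)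
    then show False using nd by blast
  qed
  have b2: "b = 2^Suc u*(2*q+1)" using b by simp
  have "(2::nat)^w dvd 2^Suc u" using \<open>w < u\<close> by (simp add: le_imp_power_dvd)
  then have "(2::nat)^w dvd 2^Suc u*(2*q+1)" by (rule dvd_mult2)
  then have "(2::nat)^w dvd b" using b2 by simp
  then have "b = 2^w* s \<or> b = 2^w*(s+1)" using nt_between_dvd ib by blast
  moreover have "s mod 4 \<noteq> 0" "(s+1) mod 4 \<noteq> 0" using s by presburger+
  ultimately obtain c where c: "b = 2^w*c" "c mod 4 \<noteq> 0" by blast
  define d where "d = u - Suc w"
  have d: "Suc u = w + 2 + d" using \<open>w < u\<close> unfolding d_def by simp
  have e1: "(2::nat)^(Suc u) = 2^w * (4 * 2^d)" unfolding d by (simp add: power_add)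
  have "2^w*c = 2^w*(4*(2^d*(2*q+1)))" unfolding c(1)[symmetric] b2 e1 by (simp add: algebra_simps)
  then have "c = 4*(2^d*(2*q+1))" by (simp only: mult_cancel1) simp
  then show False using c(2) by simp
qed

lemma nt_row_unique: "2^u*(4*q+2) = (2::nat)^u'*(4*q'+2) \<Longrightarrow> u = u' \<and> q = q'"
  using nt_val_unique[of "Suc u" q "Suc u'" q'] by simp


definition gv :: "nat \<Rightarrow> nat \<Rightarrow> nat" where "gv x y = prod_encode (2*x+1, 2*y+1)"
definition nd :: "nat \<Rightarrow> nat \<Rightarrow> nat" where "nd a b = prod_encode (2*a, 2*b)"
definition cpos :: "nat \<Rightarrow> complex" where
  "cpos v = Complex (real (fst (prod_decode v))) (real (snd (prod_decode v)))"
definition gam :: "nat set \<Rightarrow> real \<Rightarrow> complex" where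
  "gam e = linepath (cpos (Min e)) (cpos (Max e))"
definition img :: "nat set \<Rightarrow> complex set" where "img e = path_image (gam e)"
definition midp :: "nat set \<Rightarrow> complex" where "midp e = (cpos (Min e) + cpos (Max e)) / 2"

lemma cpos_gv: "cpos (gv x y) = Complex (real (2*x+1)) (real (2*y+1))"
  unfolding cpos_def gv_def by (simp add: prod_encode_inverse)
lemma cpos_nd: "cpos (nd a b) = Complex (real (2*a)) (real (2*b))"
  unfolding cpos_def nd_def by (simp add: prod_encode_inverse)
lemma cpos_inj: "cpos u = cpos v \<Longrightarrow> u = v"
  unfolding cpos_def by (metis complex.inject of_nat_eq_iff prod.collapse prod_decode_inverse)
lemma gv_inj[simp]: "gv x y = gv x' y' \<longleftrightarrow> x = x' \<and> y = y'"
  unfolding gv_def by (auto dest: inj_prod_encode[THEN injD])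
lemma nd_inj[simp]: "nd x y = nd x' y' \<longleftrightarrow> x = x' \<and> y = y'"
  unfolding nd_def by (auto dest: inj_prod_encode[THEN injD])
lemma gv_nd[simp]: "gv x y \<noteq> nd a b" "nd a b \<noteq> gv x y"
  unfolding nd_def gv_def by (auto dest!: inj_prod_encode[THEN injD]; presburger)+

lemma img_pair: assumes "a \<noteq> b" shows "img {a,b} = closed_segment (cpos a) (cpos b)"
proof (cases "a < b")
  case True
  then have "Min {a,b} = a" "Max {a,b} = b" by auto
  then show ?thesis unfolding img_def gam_def by simp
next
  case False
  then have "Min {a,b} = b" "Max {a,b} = a" using assms by auto
  then show ?thesis unfolding img_def gam_def by (simp add: closed_segment_commute)
qed

lemma midp_pair: "midp {a,b} = (cpos a + cpos b) / 2"
  unfolding midp_def by (cases "a \<le> b") (auto simp: max_def min_def add.commute)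

lemma seg_h:
  assumes "x1 \<le> x2" "z \<in> closed_segment (Complex x1 y) (Complex x2 y)"
  shows "Im z = y \<and> x1 \<le> Re z \<and> Re z \<le> x2"
  using assms by (auto simp: closed_segment_same_Im closed_segment_eq_real_ivl)

lemma seg_v:
  assumes "y1 \<le> y2" "z \<in> closed_segment (Complex x y1) (Complex x y2)"
  shows "Re z = x \<and> y1 \<le> Im z \<and> Im z \<le> y2"
  using assms by (auto simp: closed_segment_same_Re closed_segment_eq_real_ivl)

lemma img_GH: "z \<in> img {gv x y, gv (Suc x) y} \<Longrightarrow>
   Im z = real (2*y+1) \<and> real (2*x+1) \<le> Re z \<and> Re z \<le> real (2*x+3)"
  using seg_h[of "real (2*x+1)" "real (2*x+3)" z "real (2*y+1)"]
  by (simp add: img_pair cpos_gv ac_simps)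

lemma img_GV: "z \<in> img {gv x y, gv x (Suc y)} \<Longrightarrow>
   Re z = real (2*x+1) \<and> real (2*y+1) \<le> Im z \<and> Im z \<le> real (2*y+3)"
  using seg_v[of "real (2*y+1)" "real (2*y+3)" z "real (2*x+1)"]
  by (simp add: img_pair cpos_gv ac_simps)

lemma img_HH: "z \<in> img {nd (2^u*t) b, nd (2^u*(t+1)) b} \<Longrightarrow>
   Im z = real (2*b) \<and> real (2*(2^u*t)) \<le> Re z \<and> Re z \<le> real (2*(2^u*(t+1)))"
  using seg_h[of "real (2*(2^u*t))" "real (2*(2^u*(t+1)))" z "real (2*b)"]
  by (simp add: img_pair cpos_nd)

lemma img_HV: "z \<in> img {nd a (2^u* s), nd a (2^u*(s+1))} \<Longrightarrow>
   Re z = real (2*a) \<and> real (2*(2^u* s)) \<le> Im z \<and> Im z \<le> real (2*(2^u*(s+1)))"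
  using seg_v[of "real (2*(2^u* s))" "real (2*(2^u*(s+1)))" z "real (2*a)"]
  by (simp add: img_pair cpos_nd)

lemma img_SP:
  assumes "z \<in> img {nd a b, gv x y}"
  obtains r where "0 \<le> r" "r \<le> 1" "Re z = real (2*a) + r * (real (2*x+1) - real (2*a))"
    "Im z = real (2*b) + r * (real (2*y+1) - real (2*b))"
proof -
  have "z \<in> closed_segment (cpos (nd a b)) (cpos (gv x y))" using assms by (simp add: img_pair)
  then obtain r where r: "r \<in> {0..1}" "z = cpos (nd a b) + of_real r * (cpos (gv x y) - cpos (nd a b))"
    by (auto simp: closed_segment_def scaleR_conv_of_real algebra_simps)
  then show ?thesis using that[of r] by (simp add: cpos_nd cpos_gv)
qed

lemma real_int_01: "0 \<le> r \<Longrightarrow> r \<le> 1 \<Longrightarrow> r = of_int k \<Longrightarrow> r = 0 \<or> r = (1::real)"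
proof -
  assume a: "0 \<le> r" "r \<le> 1" "r = of_int k"
  then have "0 \<le> k" "k \<le> 1" by linarith+
  then have "k = 0 \<or> k = 1" by linarith
  then show ?thesis using a by auto
qed

lemma spoke_int:
  assumes z: "z \<in> img {nd a b, gv x y}" and x: "Suc x = a \<or> x = a" and y: "Suc y = b \<or> y = b"
    and N: "Re z = real N \<or> Im z = real N"
  shows "z = cpos (nd a b) \<or> z = cpos (gv x y)"
proof -
  obtain r where r: "0 \<le> r" "r \<le> 1" "Re z = real (2*a) + r * (real (2*x+1) - real (2*a))"
    "Im z = real (2*b) + r * (real (2*y+1) - real (2*b))" using img_SP[OF z] by blast
  have sx: "real (2*x+1) - real (2*a) = 1 \<or> real (2*x+1) - real (2*a) = -1" using x by auto
  have sy: "real (2*y+1) - real (2*b) = 1 \<or> real (2*y+1) - real (2*b) = -1" using y by auto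
  have "\<exists>k::int. r = of_int k"
  proof (cases "Re z = real N")
    case True
    then have "r * (real (2*x+1) - real (2*a)) = of_int (int N - int (2*a))" using r(3) by simp
    then show ?thesis using sx by (metis mult.right_neutral mult_minus_right minus_minus of_int_minus)
  next
    case False
    then have "Im z = real N" using N by simp
    then have "r * (real (2*y+1) - real (2*b)) = of_int (int N - int (2*b))" using r(4) by simp
    then show ?thesis using sy by (metis mult.right_neutral mult_minus_right minus_minus of_int_minus)
  qed
  then obtain k where "r = of_int k" by blast
  then have "r = 0 \<or> r = 1" using real_int_01 r(1,2) by blast
  then show ?thesis
  proof
    assume "r = 0" then show ?thesis using r(3,4) by (simp add: cpos_nd complex_eq_iff)
  next
    assume "r = 1" then show ?thesis using r(3,4) by (simp add: cpos_gv complex_eq_iff)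
  qed
qed


definition isGH :: "nat set \<Rightarrow> bool" where "isGH e \<longleftrightarrow> (\<exists>x y. e = {gv x y, gv (Suc x) y})"
definition isGV :: "nat set \<Rightarrow> bool" where "isGV e \<longleftrightarrow> (\<exists>x y. e = {gv x y, gv x (Suc y)})"
definition isHH :: "nat set \<Rightarrow> bool" where
  "isHH e \<longleftrightarrow> (\<exists>u t q. (t mod 4 = 1 \<or> t mod 4 = 2) \<and>
      e = {nd (2^u*t) (2^u*(4*q+2)), nd (2^u*(t+1)) (2^u*(4*q+2))})"
definition isHV :: "nat set \<Rightarrow> bool" where
  "isHV e \<longleftrightarrow> (\<exists>u s p. (s mod 4 = 1 \<or> s mod 4 = 2) \<and>
      e = {nd (2^u*(2*p+1)) (2^u* s), nd (2^u*(2*p+1)) (2^u*(s+1))})"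
definition isSP :: "nat set \<Rightarrow> bool" where
  "isSP e \<longleftrightarrow> (\<exists>a b x y. (Suc x = a \<or> x = a) \<and> (Suc y = b \<or> y = b) \<and> e = {nd a b, gv x y})"

definition isG where "isG e \<longleftrightarrow> isGH e \<or> isGV e"
definition isH where "isH e \<longleftrightarrow> isHH e \<or> isHV e"
definition cc :: "nat set \<Rightarrow> nat set \<Rightarrow> complex \<Rightarrow> bool" where
  "cc e f z \<longleftrightarrow> (isG e \<and> isH f \<and> z = midp e) \<or> (isG f \<and> isH e \<and> z = midp f)"

lemma cc_sym: "cc e f z \<longleftrightarrow> cc f e z" unfolding cc_def by blast

lemma pt_eq: "Re z = a \<Longrightarrow> Im z = b \<Longrightarrow> z = Complex a b" by (simp add: complex_eq_iff)

lemma nat_close: "\<bar>real a - real b\<bar> < 1 \<Longrightarrow> a = (b::nat)"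
proof (rule ccontr)
  assume h: "\<bar>real a - real b\<bar> < 1" "a \<noteq> b"
  then consider "a < b" | "b < a" by linarith
  then show False
  proof cases
    case 1 then have "real a + 1 \<le> real b" by simp
    then show False using h by linarith
  next
    case 2 then have "real b + 1 \<le> real a" by simp
    then show False using h by linarith
  qed
qed

lemma img_SP':
  assumes z: "z \<in> img {nd a b, gv x y}" and x: "Suc x = a \<or> x = a" and y: "Suc y = b \<or> y = b"
  obtains r \<sigma> \<tau> where "0 \<le> r" "r \<le> 1" "\<bar>\<sigma>\<bar> = 1" "\<bar>\<tau>\<bar> = 1"
    "Re z = 2 * real a + r * \<sigma>" "Im z = 2 * real b + r * \<tau>"
    "real (2*x+1) = 2 * real a + \<sigma>" "real (2*y+1) = 2 * real b + \<tau>"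
proof -
  obtain r where r: "0 \<le> r" "r \<le> 1" "Re z = real (2*a) + r * (real (2*x+1) - real (2*a))"
    "Im z = real (2*b) + r * (real (2*y+1) - real (2*b))" using img_SP[OF z] by blast
  have sx: "\<bar>real (2*x+1) - real (2*a)\<bar> = 1" using x by auto
  have sy: "\<bar>real (2*y+1) - real (2*b)\<bar> = 1" using y by auto
  show ?thesis
    apply (rule that[of r "real (2*x+1) - real (2*a)" "real (2*y+1) - real (2*b)"])
    using r sx sy by auto
qed

lemma spoke_axis:
  assumes f: "isSP f" and z: "z \<in> img f" and N: "Re z = real N \<or> Im z = real N"
  shows "z \<in> cpos ` f"
proof -
  obtain a b x y where f': "Suc x = a \<or> x = a" "Suc y = b \<or> y = b" "f = {nd a b, gv x y}"
    using f unfolding isSP_def by blast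
  have "z = cpos (nd a b) \<or> z = cpos (gv x y)" using spoke_int[OF _ f'(1,2) N] z f'(3) by simp
  then show ?thesis using f'(3) by auto
qed

lemma GH_GH:
  assumes "e = {gv x y, gv (Suc x) y}" "f = {gv x' y', gv (Suc x') y'}" "e \<noteq> f"
    "z \<in> img e" "z \<in> img f" "z \<notin> cpos ` (e \<union> f)"
  shows False
proof -
  have A: "Im z = real (2*y+1)" "real (2*x+1) \<le> Re z" "Re z \<le> real (2*x+3)" using img_GH assms(1,4) by blast+
  have B: "Im z = real (2*y'+1)" "real (2*x'+1) \<le> Re z" "Re z \<le> real (2*x'+3)" using img_GH assms(2,5) by blast+
  have "y = y'" using A(1) B(1) by simp
  have "x \<noteq> x'" using assms(1-3) \<open>y = y'\<close> by auto
  then consider "x < x'" | "x' < x" by linarith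
  then show False
  proof cases
    case 1
    then have "real (2*x+3) \<le> real (2*x'+1)" by simp
    then have "z = Complex (real (2*(Suc x)+1)) (real (2*y+1))" using A B by (intro pt_eq) auto
    then have "z = cpos (gv (Suc x) y)" by (simp add: cpos_gv)
    then show False using assms(1,6) by auto
  next
    case 2
    then have "real (2*x'+3) \<le> real (2*x+1)" by simp
    then have "z = Complex (real (2*(Suc x')+1)) (real (2*y'+1))" using A B by (intro pt_eq) auto
    then have "z = cpos (gv (Suc x') y')" by (simp add: cpos_gv)
    then show False using assms(2,6) by auto
  qed
qed

lemma GV_GV:
  assumes "e = {gv x y, gv x (Suc y)}" "f = {gv x' y', gv x' (Suc y')}" "e \<noteq> f"
    "z \<in> img e" "z \<in> img f" "z \<notin> cpos ` (e \<union> f)"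
  shows False
proof -
  have A: "Re z = real (2*x+1)" "real (2*y+1) \<le> Im z" "Im z \<le> real (2*y+3)" using img_GV assms(1,4) by blast+
  have B: "Re z = real (2*x'+1)" "real (2*y'+1) \<le> Im z" "Im z \<le> real (2*y'+3)" using img_GV assms(2,5) by blast+
  have "x = x'" using A(1) B(1) by simp
  have "y \<noteq> y'" using assms(1-3) \<open>x = x'\<close> by auto
  then consider "y < y'" | "y' < y" by linarith
  then show False
  proof cases
    case 1
    then have "real (2*y+3) \<le> real (2*y'+1)" by simp
    then have "z = Complex (real (2*x+1)) (real (2*(Suc y)+1))" using A B by (intro pt_eq) auto
    then have "z = cpos (gv x (Suc y))" by (simp add: cpos_gv)
    then show False using assms(1,6) by auto
  next
    case 2
    then have "real (2*y'+3) \<le> real (2*y+1)" by simp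
    then have "z = Complex (real (2*x'+1)) (real (2*(Suc y')+1))" using A B by (intro pt_eq) auto
    then have "z = cpos (gv x' (Suc y'))" by (simp add: cpos_gv)
    then show False using assms(2,6) by auto
  qed
qed

lemma GH_GV:
  assumes "e = {gv x y, gv (Suc x) y}" "f = {gv x' y', gv x' (Suc y')}"
    "z \<in> img e" "z \<in> img f" "z \<notin> cpos ` (e \<union> f)"
  shows False
proof -
  have A: "Im z = real (2*y+1)" "real (2*x+1) \<le> Re z" "Re z \<le> real (2*x+3)" using img_GH assms(1,3) by blast+
  have B: "Re z = real (2*x'+1)" using img_GV assms(2,4) by blast
  have "x \<le> x'" "x' \<le> Suc x" using A B by simp_all
  then have "x' = x \<or> x' = Suc x" by linarith
  moreover have "z = cpos (gv x' y)" using A(1) B by (simp add: cpos_gv complex_eq_iff)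
  ultimately show False using assms(1,5) by auto
qed

lemma GH_HH:
  assumes "e = {gv x y, gv (Suc x) y}" "f = {nd (2^u*t) b, nd (2^u*(t+1)) b}"
    "z \<in> img e" "z \<in> img f"
  shows False
proof -
  have "Im z = real (2*y+1)" using img_GH assms(1,3) by blast
  moreover have "Im z = real (2*b)" using img_HH assms(2,4) by blast
  ultimately have "2*y+1 = 2*b" by linarith
  then show False by presburger
qed

lemma GV_HV:
  assumes "e = {gv x y, gv x (Suc y)}" "f = {nd a (2^u* s), nd a (2^u*(s+1))}"
    "z \<in> img e" "z \<in> img f"
  shows False
proof -
  have "Re z = real (2*x+1)" using img_GV assms(1,3) by blast
  moreover have "Re z = real (2*a)" using img_HV assms(2,4) by blast
  ultimately have "2*x+1 = 2*a" by linarith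
  then show False by presburger
qed

lemma GH_HV:
  assumes "e = {gv x y, gv (Suc x) y}" "f = {nd a (2^u* s), nd a (2^u*(s+1))}"
    "z \<in> img e" "z \<in> img f"
  shows "z = midp e"
proof -
  have A: "Im z = real (2*y+1)" "real (2*x+1) \<le> Re z" "Re z \<le> real (2*x+3)" using img_GH assms(1,3) by blast+
  have B: "Re z = real (2*a)" using img_HV assms(2,4) by blast
  have "2*x+1 \<le> 2*a" "2*a \<le> 2*x+3" using A B by linarith+
  then have "a = Suc x" by presburger
  then have r: "real a = 1 + real x" by simp
  show ?thesis using A B assms(1) r by (simp add: midp_pair cpos_gv complex_eq_iff)
qed

lemma GV_HH:
  assumes "e = {gv x y, gv x (Suc y)}" "f = {nd (2^u*t) b, nd (2^u*(t+1)) b}"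
    "z \<in> img e" "z \<in> img f"
  shows "z = midp e"
proof -
  have A: "Re z = real (2*x+1)" "real (2*y+1) \<le> Im z" "Im z \<le> real (2*y+3)" using img_GV assms(1,3) by blast+
  have B: "Im z = real (2*b)" using img_HH assms(2,4) by blast
  have "2*y+1 \<le> 2*b" "2*b \<le> 2*y+3" using A B by linarith+
  then have "b = Suc y" by presburger
  then have r: "real b = 1 + real y" by simp
  show ?thesis using A B assms(1) r by (simp add: midp_pair cpos_gv complex_eq_iff)
qed

lemma HH_HH:
  assumes "e = {nd (2^u*t) (2^u*(4*q+2)), nd (2^u*(t+1)) (2^u*(4*q+2))}"
    "f = {nd (2^u'*t') (2^u'*(4*q'+2)), nd (2^u'*(t'+1)) (2^u'*(4*q'+2))}" "e \<noteq> f"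
    "z \<in> img e" "z \<in> img f" "z \<notin> cpos ` (e \<union> f)"
  shows False
proof -
  have A: "Im z = real (2*(2^u*(4*q+2)))" "real (2*(2^u*t)) \<le> Re z" "Re z \<le> real (2*(2^u*(t+1)))"
    using img_HH assms(1,4) by blast+
  have B: "Im z = real (2*(2^u'*(4*q'+2)))" "real (2*(2^u'*t')) \<le> Re z" "Re z \<le> real (2*(2^u'*(t'+1)))"
    using img_HH assms(2,5) by blast+
  have "real (2*(2^u*(4*q+2))) = real (2*(2^u'*(4*q'+2)))" using A(1) B(1) by metis
  then have "2*(2^u*(4*q+2)) = 2*((2::nat)^u'*(4*q'+2))" by (simp only: of_nat_eq_iff)
  then have "2^u*(4*q+2) = (2::nat)^u'*(4*q'+2)" by simp
  then have uq: "u = u'" "q = q'" using nt_row_unique by blast+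
  have "t \<noteq> t'" using assms(1-3) uq by auto
  then consider "t < t'" | "t' < t" by linarith
  then show False
  proof cases
    case 1
    then have "2^u*(t+1) \<le> (2::nat)^u*t'" by (intro mult_le_mono2) simp
    then have "real (2*(2^u*(t+1))) \<le> real (2*(2^u'*t'))" unfolding uq(1)[symmetric] of_nat_le_iff by simp
    then have "z = Complex (real (2*(2^u*(t+1)))) (real (2*(2^u*(4*q+2))))" using A B by (intro pt_eq) auto
    then have "z = cpos (nd (2^u*(t+1)) (2^u*(4*q+2)))" by (simp only: cpos_nd)
    then show False using assms(1,6) by auto
  next
    case 2
    then have "2^u*(t'+1) \<le> (2::nat)^u*t" by (intro mult_le_mono2) simp
    then have "real (2*(2^u'*(t'+1))) \<le> real (2*(2^u*t))" unfolding uq(1)[symmetric] of_nat_le_iff by simp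
    then have "z = Complex (real (2*(2^u'*(t'+1)))) (real (2*(2^u'*(4*q'+2))))" using A B by (intro pt_eq) auto
    then have "z = cpos (nd (2^u'*(t'+1)) (2^u'*(4*q'+2)))" by (simp only: cpos_nd)
    then show False using assms(2,6) by auto
  qed
qed

lemma HV_HV:
  assumes "e = {nd (2^u*(2*p+1)) (2^u* s), nd (2^u*(2*p+1)) (2^u*(s+1))}"
    "f = {nd (2^u'*(2*p'+1)) (2^u'* s'), nd (2^u'*(2*p'+1)) (2^u'*(s'+1))}" "e \<noteq> f"
    "z \<in> img e" "z \<in> img f" "z \<notin> cpos ` (e \<union> f)"
  shows False
proof -
  have A: "Re z = real (2*(2^u*(2*p+1)))" "real (2*(2^u* s)) \<le> Im z" "Im z \<le> real (2*(2^u*(s+1)))"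
    using img_HV assms(1,4) by blast+
  have B: "Re z = real (2*(2^u'*(2*p'+1)))" "real (2*(2^u'* s')) \<le> Im z" "Im z \<le> real (2*(2^u'*(s'+1)))"
    using img_HV assms(2,5) by blast+
  have "real (2*(2^u*(2*p+1))) = real (2*(2^u'*(2*p'+1)))" using A(1) B(1) by metis
  then have "2*(2^u*(2*p+1)) = 2*((2::nat)^u'*(2*p'+1))" by (simp only: of_nat_eq_iff)
  then have "2^u*(2*p+1) = (2::nat)^u'*(2*p'+1)" by simp
  then have uq: "u = u'" "p = p'" using nt_val_unique by blast+
  have "s \<noteq> s'" using assms(1-3) uq by auto
  then consider "s < s'" | "s' < s" by linarith
  then show False
  proof cases
    case 1
    then have "2^u*(s+1) \<le> (2::nat)^u* s'" by (intro mult_le_mono2) simp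
    then have "real (2*(2^u*(s+1))) \<le> real (2*(2^u'* s'))" unfolding uq(1)[symmetric] of_nat_le_iff by simp
    then have "z = Complex (real (2*(2^u*(2*p+1)))) (real (2*(2^u*(s+1))))" using A B by (intro pt_eq) auto
    then have "z = cpos (nd (2^u*(2*p+1)) (2^u*(s+1)))" by (simp only: cpos_nd)
    then show False using assms(1,6) by auto
  next
    case 2
    then have "2^u*(s'+1) \<le> (2::nat)^u* s" by (intro mult_le_mono2) simp
    then have "real (2*(2^u'*(s'+1))) \<le> real (2*(2^u* s))" unfolding uq(1)[symmetric] of_nat_le_iff by simp
    then have "z = Complex (real (2*(2^u'*(2*p'+1)))) (real (2*(2^u'*(s'+1))))" using A B by (intro pt_eq) auto
    then have "z = cpos (nd (2^u'*(2*p'+1)) (2^u'*(s'+1)))" by (simp only: cpos_nd)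
    then show False using assms(2,6) by auto
  qed
qed

lemma HH_HV:
  assumes "e = {nd (2^u*t) (2^u*(4*q+2)), nd (2^u*(t+1)) (2^u*(4*q+2))}"
    "f = {nd (2^w*(2*p+1)) (2^w* s), nd (2^w*(2*p+1)) (2^w*(s+1))}" "s mod 4 = 1 \<or> s mod 4 = 2"
    "z \<in> img e" "z \<in> img f" "z \<notin> cpos ` (e \<union> f)"
  shows False
proof -
  define a where "a = 2^w*(2*p+1)"
  define b where "b = 2^u*(4*q+2)"
  have A: "Im z = real (2*b)" "real (2*(2^u*t)) \<le> Re z" "Re z \<le> real (2*(2^u*(t+1)))"
    using img_HH assms(1,4) unfolding b_def by blast+
  have B: "Re z = real (2*a)" "real (2*(2^w* s)) \<le> Im z" "Im z \<le> real (2*(2^w*(s+1)))"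
    using img_HV assms(2,5) unfolding a_def by blast+
  have "real (2*(2^u*t)) \<le> real (2*a)" "real (2*a) \<le> real (2*(2^u*(t+1)))" using A(2,3) B(1) by simp_all
  then have "2*(2^u*t) \<le> 2*a" "2*a \<le> 2*(2^u*(t+1))" by (simp_all only: of_nat_le_iff)
  then have ia: "2^u*t \<le> a" "a \<le> 2^u*(t+1)" by simp_all
  have "real (2*(2^w* s)) \<le> real (2*b)" "real (2*b) \<le> real (2*(2^w*(s+1)))" using B(2,3) A(1) by simp_all
  then have "2*(2^w* s) \<le> 2*b" "2*b \<le> 2*(2^w*(s+1))" by (simp_all only: of_nat_le_iff)
  then have ib: "2^w* s \<le> b" "b \<le> 2^w*(s+1)" by simp_all
  have "a = 2^u*t \<or> a = 2^u*(t+1)" using nt_hh_hv[OF a_def b_def ia ib assms(3)] .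
  moreover have "z = cpos (nd a b)" using A(1) B(1) by (simp add: cpos_nd complex_eq_iff)
  ultimately show False using assms(1,6) unfolding b_def by auto
qed

lemma SP_SP:
  assumes "e = {nd a b, gv x y}" "Suc x = a \<or> x = a" "Suc y = b \<or> y = b"
    "f = {nd a' b', gv x' y'}" "Suc x' = a' \<or> x' = a'" "Suc y' = b' \<or> y' = b'" "e \<noteq> f"
    "z \<in> img e" "z \<in> img f" "z \<notin> cpos ` (e \<union> f)"
  shows False
proof -
  obtain r \<sigma> \<tau> where A: "0 \<le> r" "r \<le> 1" "\<bar>\<sigma>\<bar> = 1" "\<bar>\<tau>\<bar> = 1"
    "Re z = 2 * real a + r * \<sigma>" "Im z = 2 * real b + r * \<tau>"
    "real (2*x+1) = 2 * real a + \<sigma>" "real (2*y+1) = 2 * real b + \<tau>"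
    using img_SP'[of z a b x y] assms(1,2,3,8) by blast
  obtain r' \<sigma>' \<tau>' where B: "0 \<le> r'" "r' \<le> 1" "\<bar>\<sigma>'\<bar> = 1" "\<bar>\<tau>'\<bar> = 1"
    "Re z = 2 * real a' + r' * \<sigma>'" "Im z = 2 * real b' + r' * \<tau>'"
    "real (2*x'+1) = 2 * real a' + \<sigma>'" "real (2*y'+1) = 2 * real b' + \<tau>'"
    using img_SP'[of z a' b' x' y'] assms(4,5,6,9) by blast
  have ne1: "z \<noteq> cpos (nd a b)" "z \<noteq> cpos (gv x y)" using assms(1,10) by auto
  have ne2: "z \<noteq> cpos (nd a' b')" "z \<noteq> cpos (gv x' y')" using assms(4,10) by auto
  have "r \<noteq> 0" using ne1(1) A(5,6) by (auto simp: cpos_nd complex_eq_iff)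
  moreover have "r \<noteq> 1" using ne1(2) A(5-8) by (auto simp: cpos_gv complex_eq_iff)
  moreover have "r' \<noteq> 0" using ne2(1) B(5,6) by (auto simp: cpos_nd complex_eq_iff)
  moreover have "r' \<noteq> 1" using ne2(2) B(5-8) by (auto simp: cpos_gv complex_eq_iff)
  ultimately have rr: "0 < r" "r < 1" "0 < r'" "r' < 1" using A(1,2) B(1,2) by auto
  have ars: "\<bar>r * \<sigma>\<bar> = r" "\<bar>r' * \<sigma>'\<bar> = r'" "\<bar>r * \<tau>\<bar> = r" "\<bar>r' * \<tau>'\<bar> = r'"
    using A(3,4) B(3,4) rr by (auto simp: abs_mult)
  have "\<bar>real a - real a'\<bar> < 1" using A(5) B(5) ars(1,2) rr by linarith
  then have aa: "a = a'" by (rule nat_close)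
  have "\<bar>real b - real b'\<bar> < 1" using A(6) B(6) ars(3,4) rr by linarith
  then have bb: "b = b'" by (rule nat_close)
  have e1: "r * \<sigma> = r' * \<sigma>'" using A(5) B(5) aa by simp
  have e2: "r * \<tau> = r' * \<tau>'" using A(6) B(6) bb by simp
  have "r = r'" using e1 ars(1,2) by metis
  then have "\<sigma> = \<sigma>'" "\<tau> = \<tau>'" using e1 e2 rr by auto
  then have "real (2*x+1) = real (2*x'+1)" "real (2*y+1) = real (2*y'+1)" using A(7,8) B(7,8) aa bb by simp_all
  then have "x = x'" "y = y'" by simp_all
  then show False using assms(1,4,7) aa bb by simp
qed

definition kind :: "nat set \<Rightarrow> bool" where "kind e \<longleftrightarrow> isG e \<or> isH e \<or> isSP e"

lemma kind_cases:
  assumes "kind e"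
  obtains (GH) x y where "e = {gv x y, gv (Suc x) y}"
    | (GV) x y where "e = {gv x y, gv x (Suc y)}"
    | (HH) u t q where "t mod 4 = 1 \<or> t mod 4 = 2" "e = {nd (2^u*t) (2^u*(4*q+2)), nd (2^u*(t+1)) (2^u*(4*q+2))}"
    | (HV) u s p where "s mod 4 = 1 \<or> s mod 4 = 2" "e = {nd (2^u*(2*p+1)) (2^u* s), nd (2^u*(2*p+1)) (2^u*(s+1))}"
    | (SP) a b x y where "Suc x = a \<or> x = a" "Suc y = b \<or> y = b" "e = {nd a b, gv x y}"
  using assms unfolding kind_def isG_def isH_def isGH_def isGV_def isHH_def isHV_def isSP_def by metis

lemma cross_class:
  assumes ke: "kind e" and kf: "kind f" and ne: "e \<noteq> f" and ze: "z \<in> img e" and zf: "z \<in> img f"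
    and nz: "z \<notin> cpos ` (e \<union> f)"
  shows "cc e f z"
proof -
  have nz': "z \<notin> cpos ` (f \<union> e)" using nz by (simp add: Un_commute)
  have nzf: "z \<notin> cpos ` f" "z \<notin> cpos ` e" using nz by auto
  from ke show ?thesis
  proof (cases rule: kind_cases)
    case (GH x y)
    have gE: "isG e" unfolding isG_def isGH_def using GH by blast
    from kf show ?thesis
    proof (cases rule: kind_cases)
      case (GH x' y') then show ?thesis using GH_GH \<open>e = _\<close> ne ze zf nz by blast
    next
      case (GV x' y') then show ?thesis using GH_GV \<open>e = _\<close> ze zf nz by blast
    next
      case (HH u t q) then show ?thesis using GH_HH \<open>e = _\<close> ze zf by blast
    next
      case (HV u s p)
      then have "z = midp e" using GH_HV \<open>e = _\<close> ze zf by blast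
      moreover have "isH f" unfolding isH_def isHV_def using HV by blast
      ultimately show ?thesis using gE unfolding cc_def by blast
    next
      case (SP a b x' y')
      have "Im z = real (2*y+1)" using img_GH ze GH by blast
      then have "z \<in> cpos ` f" using spoke_axis zf SP unfolding isSP_def by blast
      then show ?thesis using nzf by blast
    qed
  next
    case (GV x y)
    have gE: "isG e" unfolding isG_def isGV_def using GV by blast
    from kf show ?thesis
    proof (cases rule: kind_cases)
      case (GH x' y') then show ?thesis using GH_GV \<open>e = _\<close> ze zf nz' by blast
    next
      case (GV x' y') then show ?thesis using GV_GV \<open>e = _\<close> ne ze zf nz by blast
    next
      case (HH u t q)
      then have "z = midp e" using GV_HH \<open>e = _\<close> ze zf by blast
      moreover have "isH f" unfolding isH_def isHH_def using HH by blast
      ultimately show ?thesis using gE unfolding cc_def by blast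
    next
      case (HV u s p) then show ?thesis using GV_HV \<open>e = _\<close> ze zf by blast
    next
      case (SP a b x' y')
      have "Re z = real (2*x+1)" using img_GV ze GV by blast
      then have "z \<in> cpos ` f" using spoke_axis zf SP unfolding isSP_def by blast
      then show ?thesis using nzf by blast
    qed
  next
    case (HH u t q)
    have hE: "isH e" unfolding isH_def isHH_def using HH by blast
    from kf show ?thesis
    proof (cases rule: kind_cases)
      case (GH x' y') then show ?thesis using GH_HH \<open>e = _\<close> ze zf by blast
    next
      case (GV x' y')
      then have "z = midp f" using GV_HH \<open>e = _\<close> ze zf by blast
      moreover have "isG f" unfolding isG_def isGV_def using GV by blast
      ultimately show ?thesis using hE unfolding cc_def by blast
    next
      case (HH u' t' q') then show ?thesis using HH_HH \<open>e = _\<close> ne ze zf nz by blast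
    next
      case (HV u' s p) then show ?thesis using HH_HV \<open>e = _\<close> ze zf nz by blast
    next
      case (SP a b x' y')
      have "Im z = real (2*(2^u*(4*q+2)))" using img_HH ze HH by blast
      then have "z \<in> cpos ` f" using spoke_axis zf SP unfolding isSP_def by blast
      then show ?thesis using nzf by blast
    qed
  next
    case (HV u s p)
    have hE: "isH e" unfolding isH_def isHV_def using HV by blast
    from kf show ?thesis
    proof (cases rule: kind_cases)
      case (GH x' y')
      then have "z = midp f" using GH_HV \<open>e = _\<close> ze zf by blast
      moreover have "isG f" unfolding isG_def isGH_def using GH by blast
      ultimately show ?thesis using hE unfolding cc_def by blast
    next
      case (GV x' y') then show ?thesis using GV_HV \<open>e = _\<close> ze zf by blast
    next
      case (HH u' t q') then show ?thesis using HH_HV HV \<open>f = _\<close> ze zf nz' by blast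
    next
      case (HV u' s' p') then show ?thesis using HV_HV \<open>e = _\<close> ne ze zf nz by blast
    next
      case (SP a b x' y')
      have "Re z = real (2*(2^u*(2*p+1)))" using img_HV ze HV by blast
      then have "z \<in> cpos ` f" using spoke_axis zf SP unfolding isSP_def by blast
      then show ?thesis using nzf by blast
    qed
  next
    case (SP a b x y)
    note eSP = SP
    have sE: "isSP e" unfolding isSP_def using SP by blast
    from kf show ?thesis
    proof (cases rule: kind_cases)
      case (GH x' y')
      have "Im z = real (2*y'+1)" using img_GH zf GH by blast
      then have "z \<in> cpos ` e" using spoke_axis[OF sE ze] by blast
      then show ?thesis using nzf by blast
    next
      case (GV x' y')
      have "Re z = real (2*x'+1)" using img_GV zf GV by blast
      then have "z \<in> cpos ` e" using spoke_axis[OF sE ze] by blast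
      then show ?thesis using nzf by blast
    next
      case (HH u t q)
      have "Im z = real (2*(2^u*(4*q+2)))" using img_HH zf HH by blast
      then have "z \<in> cpos ` e" using spoke_axis[OF sE ze] by blast
      then show ?thesis using nzf by blast
    next
      case (HV u s p)
      have "Re z = real (2*(2^u*(2*p+1)))" using img_HV zf HV by blast
      then have "z \<in> cpos ` e" using spoke_axis[OF sE ze] by blast
      then show ?thesis using nzf by blast
    next
      case (SP a' b' x' y')
      then show ?thesis using SP_SP[OF eSP(3,1,2) SP(3,1,2) ne ze zf nz] by blast
    qed
  qed
qed


definition Cen :: "nat \<Rightarrow> (nat \<times> nat) set" where
  "Cen m = {(2^v *(2*p+1), 2^v *(2*q+1)) | v p q. 2^v *(2*p+1) < (2::nat)^m \<and> 2^v *(2*q+1) < (2::nat)^m}"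
definition okc :: "nat \<Rightarrow> nat \<Rightarrow> nat \<Rightarrow> nat \<Rightarrow> bool" where
  "okc m u p q \<longleftrightarrow> 2^u*(4*p+4) \<le> (2::nat)^m \<and> 2^u*(4*q+4) \<le> (2::nat)^m"
definition Bar :: "nat \<Rightarrow> (nat \<times> nat) set" where
  "Bar m = {(2^u*(4*p+i), 2^u*(4*q+2)) | u p q i. (i = 1 \<or> i = 3) \<and> okc m u p q}"
definition Nodes :: "nat \<Rightarrow> (nat \<times> nat) set" where "Nodes m = Cen m \<union> Bar m"
definition VV :: "nat \<Rightarrow> nat set" where
  "VV m = {gv x y | x y. x < 2^m \<and> y < 2^m} \<union> {nd a b | a b. (a,b) \<in> Nodes m}"
definition GE :: "nat \<Rightarrow> nat set set" where
  "GE m = {{gv x y, gv (Suc x) y} | x y. Suc x < 2^m \<and> y < 2^m} \<union>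
          {{gv x y, gv x (Suc y)} | x y. x < 2^m \<and> Suc y < 2^m}"
definition HE :: "nat \<Rightarrow> nat set set" where
  "HE m = {{nd (2^u*(4*p+2)) (2^u*(4*q+2)), nd (2^u*(4*p+i)) (2^u*(4*q+2))} | u p q i.
              (i = 1 \<or> i = 3) \<and> okc m u p q} \<union>
          {{nd (2^u*(4*p+i)) (2^u*(4*q+2)), nd (2^u*(4*p+i)) (2^u*(4*q+j))} | u p q i j.
              (i = 1 \<or> i = 3) \<and> (j = 1 \<or> j = 3) \<and> okc m u p q}"
definition SE :: "nat \<Rightarrow> nat set set" where
  "SE m = {{nd a b, gv x y} | a b x y. (a,b) \<in> Nodes m \<and> (Suc x = a \<or> x = a) \<and> (Suc y = b \<or> y = b)}"
definition EE :: "nat \<Rightarrow> nat set set" where "EE m = GE m \<union> HE m \<union> SE m"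

lemma cen_mem: "2^v *(2*p+1) < (2::nat)^m \<Longrightarrow> 2^v *(2*q+1) < (2::nat)^m \<Longrightarrow> (2^v *(2*p+1), 2^v *(2*q+1)) \<in> Cen m"
  unfolding Cen_def by blast

lemma pow_mult_less: "a < b \<Longrightarrow> (2::nat)^u * a < 2^u * b" by simp
lemma pow_pos_mult: "0 < c \<Longrightarrow> 1 \<le> (2::nat)^u * c"
proof -
  assume "0 < c"
  then have "0 < (2::nat)^u * c" by (simp only: nat_0_less_mult_iff) simp
  then show ?thesis by (simp only: One_nat_def Suc_le_eq)
qed
lemma pow_odd_pos: "1 \<le> (2::nat)^u * (2*p+1)" by (rule pow_pos_mult) simp

lemma okc_bounds:
  assumes "okc m u p q" "i = 1 \<or> i = 3"
  shows "2^u*(4*p+i) < (2::nat)^m" "2^u*(4*q+i) < (2::nat)^m" "2^u*(4*p+2) < (2::nat)^m" "2^u*(4*q+2) < (2::nat)^m"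
proof -
  have "4*p+i < 4*p+4" "4*q+i < 4*q+4" "4*p+2 < 4*p+4" "4*q+2 < 4*q+4" using assms(2) by auto
  then have "2^u*(4*p+i) < (2::nat)^u*(4*p+4)" "2^u*(4*q+i) < (2::nat)^u*(4*q+4)"
     "2^u*(4*p+2) < (2::nat)^u*(4*p+4)" "2^u*(4*q+2) < (2::nat)^u*(4*q+4)" by (simp_all only: pow_mult_less)
  then show "2^u*(4*p+i) < (2::nat)^m" "2^u*(4*q+i) < (2::nat)^m" "2^u*(4*p+2) < (2::nat)^m" "2^u*(4*q+2) < (2::nat)^m"
    using assms(1) unfolding okc_def by linarith+
qed

lemma center_in_cen: "okc m u p q \<Longrightarrow> (2^u*(4*p+2), 2^u*(4*q+2)) \<in> Cen m"
proof -
  assume a: "okc m u p q"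
  have e: "(2::nat)^u*(4*p+2) = 2^Suc u*(2*p+1)" "(2::nat)^u*(4*q+2) = 2^Suc u*(2*q+1)" by simp_all
  show ?thesis unfolding e by (rule cen_mem) (use okc_bounds[OF a, of 1] e in simp_all)
qed

lemma child_in_cen:
  assumes "okc m u p q" "i = 1 \<or> i = 3" "j = 1 \<or> j = 3"
  shows "(2^u*(4*p+i), 2^u*(4*q+j)) \<in> Cen m"
proof -
  obtain p' where p': "4*p+i = 2*p'+1" using four_form[OF assms(2)] by blast
  obtain q' where q': "4*q+j = 2*q'+1" using four_form[OF assms(3)] by blast
  show ?thesis unfolding p' q' by (rule cen_mem) (use okc_bounds[OF assms(1) assms(2)] okc_bounds[OF assms(1) assms(3)] p' q' in simp_all)
qed

lemma bar_in: "okc m u p q \<Longrightarrow> i = 1 \<or> i = 3 \<Longrightarrow> (2^u*(4*p+i), 2^u*(4*q+2)) \<in> Bar m"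
  unfolding Bar_def by blast

lemma nodes_isNode: "c \<in> Nodes m \<Longrightarrow> isNode c"
  unfolding Nodes_def Cen_def Bar_def isNode_def by blast

lemma nodes_range: assumes "(a,b) \<in> Nodes m" shows "1 \<le> a" "a < 2^m" "1 \<le> b" "b < 2^m"
proof -
  have "(1 \<le> a \<and> a < 2^m) \<and> (1 \<le> b \<and> b < 2^m)"
  proof (cases "(a,b) \<in> Cen m")
    case True
    then obtain v p q where "a = 2^v *(2*p+1)" "b = 2^v *(2*q+1)" "2^v *(2*p+1) < (2::nat)^m" "2^v *(2*q+1) < (2::nat)^m"
      unfolding Cen_def by blast
    then show ?thesis using pow_odd_pos[of v p] pow_odd_pos[of v q] by simp
  next
    case False
    then have "(a,b) \<in> Bar m" using assms unfolding Nodes_def by blast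
    then obtain u p q i where h: "a = 2^u*(4*p+i)" "b = 2^u*(4*q+2)" "i = 1 \<or> i = 3" "okc m u p q"
      unfolding Bar_def by blast
    have "0 < 4*p+i" using h(3) by auto
    then have "1 \<le> 2^u*(4*p+i)" by (rule pow_pos_mult)
    moreover have "1 \<le> 2^u*(4*q+2)" by (rule pow_pos_mult) simp
    then show ?thesis using okc_bounds[OF h(4) h(3)] h \<open>0 < 4*p+i\<close> by auto
  qed
  then show "1 \<le> a" "a < 2^m" "1 \<le> b" "b < 2^m" by auto
qed

lemma VV_cases:
  assumes "w \<in> VV m"
  obtains (G) x y where "w = gv x y" "x < 2^m" "y < 2^m"
    | (N) a b where "w = nd a b" "(a,b) \<in> Nodes m"
  using assms unfolding VV_def by blast

lemma GE_kind: "e \<in> GE m \<Longrightarrow> isG e"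
  unfolding GE_def isG_def isGH_def isGV_def by blast

lemma HE_kind: assumes "e \<in> HE m" shows "isH e"
proof -
  from assms consider (h) u p q i where "i = 1 \<or> i = 3" "okc m u p q"
      "e = {nd (2^u*(4*p+2)) (2^u*(4*q+2)), nd (2^u*(4*p+i)) (2^u*(4*q+2))}"
    | (v) u p q i j where "i = 1 \<or> i = 3" "j = 1 \<or> j = 3" "okc m u p q"
      "e = {nd (2^u*(4*p+i)) (2^u*(4*q+2)), nd (2^u*(4*p+i)) (2^u*(4*q+j))}"
    unfolding HE_def by blast
  then show ?thesis
  proof cases
    case h
    show ?thesis
    proof (cases "i = 1")
      case True
      have "e = {nd (2^u*(4*p+1)) (2^u*(4*q+2)), nd (2^u*((4*p+1)+1)) (2^u*(4*q+2))}"
        using h True by (simp add: insert_commute)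
      moreover have "(4*p+1) mod 4 = 1" by simp
      ultimately show ?thesis unfolding isH_def isHH_def by blast
    next
      case False
      then have "i = 3" using h by simp
      have eq3: "(4*p+2)+1 = 4*p+(3::nat)" by simp
      have "e = {nd (2^u*(4*p+2)) (2^u*(4*q+2)), nd (2^u*((4*p+2)+1)) (2^u*(4*q+2))}"
        using h(3) \<open>i = 3\<close> by (simp only: eq3)
      moreover have "(4*p+2) mod 4 = 2" by presburger
      ultimately show ?thesis unfolding isH_def isHH_def by blast
    qed
  next
    case v
    obtain p' where p': "4*p+i = 2*p'+1" using four_form[OF v(1)] by blast
    show ?thesis
    proof (cases "j = 1")
      case True
      have "e = {nd (2^u*(2*p'+1)) (2^u*(4*q+1)), nd (2^u*(2*p'+1)) (2^u*((4*q+1)+1))}"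
        using v True p' by (simp add: insert_commute)
      moreover have "(4*q+1) mod 4 = 1" by simp
      ultimately show ?thesis unfolding isH_def isHV_def by blast
    next
      case False
      then have "j = 3" using v by simp
      have eq3: "(4*q+2)+1 = 4*q+(3::nat)" by simp
      have "e = {nd (2^u*(2*p'+1)) (2^u*(4*q+2)), nd (2^u*(2*p'+1)) (2^u*((4*q+2)+1))}"
        using v(4) \<open>j = 3\<close> p' by (simp only: eq3)
      moreover have "(4*q+2) mod 4 = 2" by presburger
      ultimately show ?thesis unfolding isH_def isHV_def by blast
    qed
  qed
qed

lemma SE_kind: "e \<in> SE m \<Longrightarrow> isSP e"
  unfolding SE_def isSP_def by blast

lemma EE_kind: "e \<in> EE m \<Longrightarrow> kind e"
  unfolding EE_def kind_def using GE_kind HE_kind SE_kind by blast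


lemma VV_finite: "finite (VV m)"
proof -
  have "{gv x y | x y. x < 2^m \<and> y < 2^m} = (\<lambda>(x,y). gv x y) ` ({..<2^m} \<times> {..<2^m})" by auto
  then have f1: "finite {gv x y | x y. x < 2^m \<and> y < 2^m}" by simp
  have "Nodes m \<subseteq> {..<2^m} \<times> {..<2^m}" using nodes_range by fastforce
  then have "finite (Nodes m)" using finite_subset by blast
  moreover have "{nd a b | a b. (a,b) \<in> Nodes m} = (\<lambda>(a,b). nd a b) ` Nodes m" by force
  ultimately have f2: "finite {nd a b | a b. (a,b) \<in> Nodes m}" by simp
  show ?thesis unfolding VV_def using f1 f2 by simp
qed

lemma gvV: "x < 2^m \<Longrightarrow> y < 2^m \<Longrightarrow> gv x y \<in> VV m" unfolding VV_def by blast
lemma ndV: "(a,b) \<in> Nodes m \<Longrightarrow> nd a b \<in> VV m" unfolding VV_def by blast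

lemma pow_mult_neq: "a \<noteq> b \<Longrightarrow> (2::nat)^u * a \<noteq> 2^u * b" by simp

lemma EE_edge:
  assumes "e \<in> EE m"
  shows "\<exists>a b. a \<in> VV m \<and> b \<in> VV m \<and> a \<noteq> b \<and> e = {a,b}"
proof -
  consider "e \<in> GE m" | "e \<in> HE m" | "e \<in> SE m" using assms unfolding EE_def by blast
  then show ?thesis
  proof cases
    case 1
    then consider (h) x y where "Suc x < 2^m" "y < 2^m" "e = {gv x y, gv (Suc x) y}"
      | (v) x y where "x < 2^m" "Suc y < 2^m" "e = {gv x y, gv x (Suc y)}" unfolding GE_def by blast
    then show ?thesis
    proof cases
      case h then show ?thesis using gvV[of x m y] gvV[of "Suc x" m y] by (intro exI[of _ "gv x y"] exI[of _ "gv (Suc x) y"]) simp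
    next
      case v then show ?thesis using gvV[of x m y] gvV[of x m "Suc y"] by (intro exI[of _ "gv x y"] exI[of _ "gv x (Suc y)"]) simp
    qed
  next
    case 2
    then consider (h) u p q i where "i = 1 \<or> i = 3" "okc m u p q"
      "e = {nd (2^u*(4*p+2)) (2^u*(4*q+2)), nd (2^u*(4*p+i)) (2^u*(4*q+2))}"
    | (v) u p q i j where "i = 1 \<or> i = 3" "j = 1 \<or> j = 3" "okc m u p q"
      "e = {nd (2^u*(4*p+i)) (2^u*(4*q+2)), nd (2^u*(4*p+i)) (2^u*(4*q+j))}"
      unfolding HE_def by blast
    then show ?thesis
    proof cases
      case h
      have a: "nd (2^u*(4*p+2)) (2^u*(4*q+2)) \<in> VV m" using ndV center_in_cen[OF h(2)] unfolding Nodes_def by blast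
      have b: "nd (2^u*(4*p+i)) (2^u*(4*q+2)) \<in> VV m" using ndV bar_in[OF h(2,1)] unfolding Nodes_def by blast
      have "4*p+2 \<noteq> 4*p+i" using h(1) by auto
      then have "2^u*(4*p+2) \<noteq> (2::nat)^u*(4*p+i)" by (rule pow_mult_neq)
      then have "nd (2^u*(4*p+2)) (2^u*(4*q+2)) \<noteq> nd (2^u*(4*p+i)) (2^u*(4*q+2))" by (simp only: nd_inj) simp
      then show ?thesis using a b h(3) by blast
    next
      case v
      have a: "nd (2^u*(4*p+i)) (2^u*(4*q+2)) \<in> VV m" using ndV bar_in[OF v(3,1)] unfolding Nodes_def by blast
      have b: "nd (2^u*(4*p+i)) (2^u*(4*q+j)) \<in> VV m" using ndV child_in_cen[OF v(3,1,2)] unfolding Nodes_def by blast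
      have "4*q+2 \<noteq> 4*q+j" using v(2) by auto
      then have "2^u*(4*q+2) \<noteq> (2::nat)^u*(4*q+j)" by (rule pow_mult_neq)
      then have "nd (2^u*(4*p+i)) (2^u*(4*q+2)) \<noteq> nd (2^u*(4*p+i)) (2^u*(4*q+j))" by (simp only: nd_inj) simp
      then show ?thesis using a b v(4) by blast
    qed
  next
    case 3
    then obtain a b x y where h: "(a,b) \<in> Nodes m" "Suc x = a \<or> x = a" "Suc y = b \<or> y = b" "e = {nd a b, gv x y}"
      unfolding SE_def by blast
    have "x < 2^m" "y < 2^m" using nodes_range[OF h(1)] h(2,3) by auto
    then have "gv x y \<in> VV m" by (rule gvV)
    moreover have "nd a b \<in> VV m" using ndV[OF h(1)] .
    ultimately show ?thesis using h(4) by (intro exI[of _ "nd a b"] exI[of _ "gv x y"]) simp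
  qed
qed

lemma sgraph_VE: "sgraph (VV m) (EE m)"
  unfolding sgraph_def using VV_finite EE_edge by blast


definition isVert :: "nat \<Rightarrow> bool" where
  "isVert w \<longleftrightarrow> (\<exists>x y. w = gv x y) \<or> (\<exists>a b. w = nd a b \<and> isNode (a,b))"

lemma VV_isVert: assumes "w \<in> VV m" shows "isVert w"
  using assms
proof (cases rule: VV_cases)
  case (G x y) then show ?thesis unfolding isVert_def by blast
next
  case (N a b) then show ?thesis unfolding isVert_def using nodes_isNode by blast
qed

lemma vert_on_edge:
  assumes k: "kind e" and w: "isVert w" and z: "cpos w \<in> img e"
  shows "w \<in> e"
proof -
  from k show ?thesis
  proof (cases rule: kind_cases)
    case (GH x y)
    have A: "Im (cpos w) = real (2*y+1)" "real (2*x+1) \<le> Re (cpos w)" "Re (cpos w) \<le> real (2*x+3)"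
      using img_GH z GH by blast+
    from w show ?thesis unfolding isVert_def
    proof (elim disjE exE conjE)
      fix x' y' assume wg: "w = gv x' y'"
      then have "y' = y" "2*x+1 \<le> 2*x'+1" "2*x'+1 \<le> 2*x+3" using A by (simp_all add: cpos_gv)
      then have "x' = x \<or> x' = Suc x" by linarith
      then show ?thesis using wg GH \<open>y' = y\<close> by auto
    next
      fix a b assume "w = nd a b"
      then have "2*b = 2*y+1" using A(1) by (simp add: cpos_nd)
      then have False by presburger
      then show ?thesis ..
    qed
  next
    case (GV x y)
    have A: "Re (cpos w) = real (2*x+1)" "real (2*y+1) \<le> Im (cpos w)" "Im (cpos w) \<le> real (2*y+3)"
      using img_GV z GV by blast+
    from w show ?thesis unfolding isVert_def
    proof (elim disjE exE conjE)
      fix x' y' assume wg: "w = gv x' y'"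
      then have "x' = x" "2*y+1 \<le> 2*y'+1" "2*y'+1 \<le> 2*y+3" using A by (simp_all add: cpos_gv)
      then have "y' = y \<or> y' = Suc y" by linarith
      then show ?thesis using wg GV \<open>x' = x\<close> by auto
    next
      fix a b assume "w = nd a b"
      then have "2*a = 2*x+1" using A(1) by (simp add: cpos_nd)
      then have False by presburger
      then show ?thesis ..
    qed
  next
    case (HH u t q)
    define B where "B = 2^u*(4*q+2)"
    have A: "Im (cpos w) = real (2*B)" "real (2*(2^u*t)) \<le> Re (cpos w)" "Re (cpos w) \<le> real (2*(2^u*(t+1)))"
      using img_HH z HH unfolding B_def by blast+
    from w show ?thesis unfolding isVert_def
    proof (elim disjE exE conjE)
      fix x' y' assume "w = gv x' y'"
      then have "2*y'+1 = 2*B" using A(1) by (simp add: cpos_gv)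
      then have False by presburger
      then show ?thesis ..
    next
      fix a b assume wn: "w = nd a b" and nb: "isNode (a,b)"
      have "real (2*b) = real (2*B)" using A(1) wn by (simp add: cpos_nd)
      then have bB: "b = B" by simp
      have "real (2*(2^u*t)) \<le> real (2*a)" "real (2*a) \<le> real (2*(2^u*(t+1)))" using A(2,3) wn by (simp_all add: cpos_nd)
      then have "2*(2^u*t) \<le> 2*a" "2*a \<le> 2*(2^u*(t+1))" by (simp_all only: of_nat_le_iff)
      then have ia: "2^u*t \<le> a" "a \<le> 2^u*(t+1)" by simp_all
      have "a = 2^u*t \<or> a = 2^u*(t+1)"
      proof (rule ccontr)
        assume "\<not> ?thesis"
        then have "2^u*t < a" "a < 2^u*(t+1)" using ia by auto
        then show False using nt_hh_interior nb bB unfolding B_def by blast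
      qed
      then show ?thesis using wn bB HH unfolding B_def by auto
    qed
  next
    case (HV u s p)
    define A0 where "A0 = 2^u*(2*p+1)"
    have A: "Re (cpos w) = real (2*A0)" "real (2*(2^u* s)) \<le> Im (cpos w)" "Im (cpos w) \<le> real (2*(2^u*(s+1)))"
      using img_HV z HV unfolding A0_def by blast+
    from w show ?thesis unfolding isVert_def
    proof (elim disjE exE conjE)
      fix x' y' assume "w = gv x' y'"
      then have "2*x'+1 = 2*A0" using A(1) by (simp add: cpos_gv)
      then have False by presburger
      then show ?thesis ..
    next
      fix a b assume wn: "w = nd a b" and nb: "isNode (a,b)"
      have "real (2*a) = real (2*A0)" using A(1) wn by (simp add: cpos_nd)
      then have aA: "a = A0" by simp
      have "real (2*(2^u* s)) \<le> real (2*b)" "real (2*b) \<le> real (2*(2^u*(s+1)))" using A(2,3) wn by (simp_all add: cpos_nd)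
      then have "2*(2^u* s) \<le> 2*b" "2*b \<le> 2*(2^u*(s+1))" by (simp_all only: of_nat_le_iff)
      then have ib: "2^u* s \<le> b" "b \<le> 2^u*(s+1)" by simp_all
      have "b = 2^u* s \<or> b = 2^u*(s+1)"
      proof (rule ccontr)
        assume "\<not> ?thesis"
        then have "2^u* s < b" "b < 2^u*(s+1)" using ib by auto
        then show False using nt_hv_interior nb aA unfolding A0_def by blast
      qed
      then show ?thesis using wn aA HV unfolding A0_def by auto
    qed
  next
    case (SP a b x y)
    have sp: "isSP e" unfolding isSP_def using SP by blast
    have "\<exists>N. Re (cpos w) = real N"
      using w unfolding isVert_def
    proof (elim disjE exE conjE)
      fix x' y' assume "w = gv x' y'" then show ?thesis by (intro exI[of _ "2*x'+1"]) (simp only: cpos_gv complex.sel)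
    next
      fix a' b' assume "w = nd a' b'" then show ?thesis by (intro exI[of _ "2*a'"]) (simp only: cpos_nd complex.sel)
    qed
    then obtain N where "Re (cpos w) = real N" by blast
    then have "cpos w \<in> cpos ` e" using spoke_axis[OF sp z] by blast
    then show ?thesis using cpos_inj by blast
  qed
qed

lemma lp_end:
  assumes "a \<noteq> b"
  shows "linepath a b t = a \<Longrightarrow> t = 0" "linepath a b t = b \<Longrightarrow> t = 1"
proof -
  assume "linepath a b t = a"
  then have "t *\<^sub>R (b - a) = 0" unfolding linepath_def by (simp add: algebra_simps)
  then show "t = 0" using assms by simp
next
  assume "linepath a b t = b"
  then have "(1 - t) *\<^sub>R (a - b) = 0" unfolding linepath_def by (simp add: algebra_simps)
  then show "t = 1" using assms by simp
qed

lemma EE_pair: assumes "e \<in> EE m" obtains a b where "a \<noteq> b" "e = {a,b}" "a \<in> VV m" "b \<in> VV m"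
  using EE_edge[OF assms] by blast

lemma embedding_VE: "embedding (VV m) (EE m) cpos gam"
  unfolding embedding_def
proof (intro conjI ballI allI impI)
  show "inj_on cpos (VV m)" using cpos_inj by (meson inj_onI)
next
  fix e assume e: "e \<in> EE m"
  show "path (gam e)" unfolding gam_def by simp
  obtain a b where ab: "a \<noteq> b" "e = {a,b}" using EE_pair[OF e] by blast
  have mm: "{Min e, Max e} = {a,b}" using ab by (cases "a < b") (auto simp: min_def max_def)
  fix u v assume "e = {u,v}"
  then have "{u,v} = {a,b}" using ab by simp
  then show "{pathstart (gam e), pathfinish (gam e)} = {cpos u, cpos v}"
    unfolding gam_def using mm by (auto simp: doubleton_eq_iff)
next
  fix e w assume e: "e \<in> EE m" and w: "w \<in> VV m"
  obtain a b where ab: "a \<noteq> b" "e = {a,b}" using EE_pair[OF e] by blast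
  have mm: "Min e \<noteq> Max e" "Min e \<in> e" "Max e \<in> e" using ab by (auto simp: min_def max_def)
  show "cpos w \<notin> gam e ` {0<..<1}"
  proof
    assume "cpos w \<in> gam e ` {0<..<1}"
    then obtain t where t: "0 < t" "t < 1" "cpos w = gam e t" by auto
    then have "cpos w \<in> img e" unfolding img_def path_image_def by auto
    then have "w \<in> e" using vert_on_edge[OF EE_kind[OF e] VV_isVert[OF w]] by blast
    then have "w = Min e \<or> w = Max e" using ab by (auto simp: min_def max_def)
    moreover have "cpos (Min e) \<noteq> cpos (Max e)" using mm(1) cpos_inj by blast
    ultimately show False using t lp_end[of "cpos (Min e)" "cpos (Max e)" t] unfolding gam_def by auto
  qed
qed


lemma H_nd: "isH h \<Longrightarrow> v \<in> h \<Longrightarrow> \<exists>a b. v = nd a b"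
  unfolding isH_def isHH_def isHV_def by auto

lemma G_gv: "isG g \<Longrightarrow> \<exists>x y. gv x y \<in> g"
  unfolding isG_def isGH_def isGV_def by auto

lemma G_not_H: "isG g \<Longrightarrow> \<not> isH g"
  using G_gv H_nd by (metis gv_nd(1))

lemma midp_not_H:
  assumes g: "isG g" and h: "isH h"
  shows "midp g \<notin> cpos ` h"
proof
  assume "midp g \<in> cpos ` h"
  then obtain v where vv: "v \<in> h" "midp g = cpos v" by blast
  obtain a b where vab: "v = nd a b" using H_nd[OF h vv(1)] by blast
  from g consider (h) x y where "g = {gv x y, gv (Suc x) y}" | (v) x y where "g = {gv x y, gv x (Suc y)}"
    unfolding isG_def isGH_def isGV_def by blast
  then show False
  proof cases
    case h
    then have "Im (midp g) = real (2*y+1)" by (simp add: midp_pair cpos_gv)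
    moreover have "Im (cpos v) = real (2*b)" using vab by (simp add: cpos_nd)
    ultimately have "2*y+1 = 2*b" using vv(2) by simp
    then show False by presburger
  next
    case v
    then have "Re (midp g) = real (2*x+1)" by (simp add: midp_pair cpos_gv)
    moreover have "Re (cpos v) = real (2*a)" using vab by (simp add: cpos_nd)
    ultimately have "2*x+1 = 2*a" using vv(2) by simp
    then show False by presburger
  qed
qed

lemma crossing_char:
  assumes "c \<in> crossings (VV m) (EE m) cpos gam"
  shows "\<exists>g h. snd c = {g,h} \<and> isG g \<and> isH h \<and> h \<in> EE m \<and> fst c = midp g \<and> fst c \<in> img h"
proof -
  obtain p e f where c: "c = (p, {e,f})" "e \<in> EE m" "f \<in> EE m" "e \<noteq> f" "p \<in> img e" "p \<in> img f"
    "p \<notin> cpos ` (e \<union> f)"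
    using assms unfolding crossings_def img_def by auto
  have "cc e f p" using cross_class[OF EE_kind[OF c(2)] EE_kind[OF c(3)] c(4-7)] .
  then show ?thesis unfolding cc_def
  proof
    assume "isG e \<and> isH f \<and> p = midp e"
    then show ?thesis using c by auto
  next
    assume "isG f \<and> isH e \<and> p = midp f"
    then show ?thesis using c by (intro exI[of _ f] exI[of _ e]) (auto simp: insert_commute)
  qed
qed

lemma one_gap_VE: "one_gap_planar_embedding (VV m) (EE m) cpos gam"
  unfolding one_gap_planar_embedding_def
proof (intro conjI)
  show "embedding (VV m) (EE m) cpos gam" by (rule embedding_VE)
  define ch where "ch c = (SOME g. g \<in> snd c \<and> isG g)" for c :: "complex \<times> nat set set"
  have chc: "ch c = g" if "snd c = {g,h}" "isG g" "isH h" for c g h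
  proof -
    have "g \<in> snd c \<and> isG g" using that by simp
    moreover have "g' = g" if g': "g' \<in> snd c \<and> isG g'" for g'
    proof -
      have "g' = g \<or> g' = h" using g' \<open>snd c = {g,h}\<close> by blast
      moreover have "g' \<noteq> h" using g' \<open>isH h\<close> G_not_H by blast
      ultimately show ?thesis by blast
    qed
    ultimately show ?thesis unfolding ch_def by (rule some_equality)
  qed
  show "\<exists>ch. (\<forall>c\<in>crossings (VV m) (EE m) cpos gam. ch c \<in> snd c) \<and>
      (\<forall>g\<in>EE m. \<forall>c1\<in>crossings (VV m) (EE m) cpos gam. \<forall>c2\<in>crossings (VV m) (EE m) cpos gam.
          ch c1 = g \<longrightarrow> ch c2 = g \<longrightarrow> c1 = c2)"
  proof (intro exI[of _ ch] conjI ballI impI)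
    fix c assume "c \<in> crossings (VV m) (EE m) cpos gam"
    from crossing_char[OF this] obtain g h where gh: "snd c = {g,h}" "isG g" "isH h" "h \<in> EE m" "fst c = midp g" "fst c \<in> img h"
      by (elim exE conjE) (rule that)
    have "ch c = g" by (rule chc[OF gh(1-3)])
    then show "ch c \<in> snd c" using \<open>snd c = {g,h}\<close> by simp
  next
    fix g c1 c2 assume c1: "c1 \<in> crossings (VV m) (EE m) cpos gam" and c2: "c2 \<in> crossings (VV m) (EE m) cpos gam"
      and e1: "ch c1 = g" and e2: "ch c2 = g"
    from crossing_char[OF c1] obtain g1 h1 where A: "snd c1 = {g1,h1}" "isG g1" "isH h1" "h1 \<in> EE m" "fst c1 = midp g1" "fst c1 \<in> img h1"
      by (elim exE conjE) (rule that)
    from crossing_char[OF c2] obtain g2 h2 where B: "snd c2 = {g2,h2}" "isG g2" "isH h2" "h2 \<in> EE m" "fst c2 = midp g2" "fst c2 \<in> img h2"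
      by (elim exE conjE) (rule that)
    have "ch c1 = g1" by (rule chc[OF A(1-3)])
    have "ch c2 = g2" by (rule chc[OF B(1-3)])
    have g12: "g1 = g" "g2 = g" using \<open>ch c1 = g1\<close> \<open>ch c2 = g2\<close> e1 e2 by simp_all
    show "c1 = c2"
    proof (cases "h1 = h2")
      case True
      have "c1 = (fst c1, snd c1)" "c2 = (fst c2, snd c2)" by simp_all
      then show ?thesis using A(1,5) B(1,5) g12 True by metis
    next
      case False
      let ?z = "midp g"
      have z1: "?z \<in> img h1" using A(5,6) g12 by simp
      have z2: "?z \<in> img h2" using B(5,6) g12 by simp
      have "?z \<notin> cpos ` h1" using midp_not_H[OF A(2) A(3)] g12 by simp
      moreover have "?z \<notin> cpos ` h2" using midp_not_H[OF A(2) B(3)] g12 by simp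
      ultimately have "?z \<notin> cpos ` (h1 \<union> h2)" by (simp add: image_Un)
      then have "cc h1 h2 ?z" using cross_class[OF EE_kind[OF A(4)] EE_kind[OF B(4)] False z1 z2] by blast
      then have "isG h1 \<or> isG h2" unfolding cc_def by blast
      then show ?thesis using A(3) B(3) G_not_H by blast
    qed
  qed
qed

lemma one_gap_planar_VE: "one_gap_planar (VV m) (EE m)"
  unfolding one_gap_planar_def using one_gap_VE by blast


definition dle :: "'a set \<Rightarrow> 'a set set \<Rightarrow> 'a \<Rightarrow> 'a \<Rightarrow> nat \<Rightarrow> bool" where
  "dle V E u v d \<longleftrightarrow> (\<exists>xs. walk V E xs \<and> hd xs = u \<and> last xs = v \<and> length xs \<le> Suc d)"

lemma dle_refl: "u \<in> V \<Longrightarrow> dle V E u u 0"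
  unfolding dle_def by (intro exI[of _ "[u]"]) simp

lemma dle_edge: "{u,v} \<in> E \<Longrightarrow> u \<in> V \<Longrightarrow> v \<in> V \<Longrightarrow> dle V E u v 1"
  unfolding dle_def by (intro exI[of _ "[u,v]"]) (simp add: walk_Cons2)

lemma dle_trans: "dle V E u v d1 \<Longrightarrow> dle V E v w d2 \<Longrightarrow> dle V E u w (d1 + d2)"
  unfolding dle_def
proof (elim exE conjE)
  fix xs ys assume a: "walk V E xs" "hd xs = u" "last xs = v" "length xs \<le> Suc d1"
    "walk V E ys" "hd ys = v" "last ys = w" "length ys \<le> Suc d2"
  then have ne: "xs \<noteq> []" "ys \<noteq> []" by (auto simp: walk_def)
  have "walk V E (xs @ tl ys)" using walk_append a by metis
  moreover have "hd (xs @ tl ys) = u" using ne a by simp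
  moreover have "last (xs @ tl ys) = w" using last_append_tl[OF ne] a by simp
  moreover have "length (xs @ tl ys) \<le> Suc (d1 + d2)" using a ne by (cases ys) auto
  ultimately show "\<exists>xs. walk V E xs \<and> hd xs = u \<and> last xs = w \<and> length xs \<le> Suc (d1 + d2)" by blast
qed

lemma dle_mono: "dle V E u v d \<Longrightarrow> d \<le> d' \<Longrightarrow> dle V E u v d'"
  unfolding dle_def by fastforce

lemma gdist_le: "dle V E u v d \<Longrightarrow> gdist V E u v \<le> enat d"
  unfolding dle_def gdist_def
proof (elim exE conjE)
  fix xs assume a: "walk V E xs" "hd xs = u" "last xs = v" "length xs \<le> Suc d"
  then have "(INF xs\<in>{xs. walk V E xs \<and> hd xs = u \<and> last xs = v}. enat (length xs - 1)) \<le> enat (length xs - 1)"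
    by (intro INF_lower) simp
  also have "\<dots> \<le> enat d" using a(4) by simp
  finally show "(INF xs\<in>{xs. walk V E xs \<and> hd xs = u \<and> last xs = v}. enat (length xs - 1)) \<le> enat d" .
qed

lemma cen_V: "2^v *(2*p+1) < (2::nat)^m \<Longrightarrow> 2^v *(2*q+1) < (2::nat)^m \<Longrightarrow> nd (2^v *(2*p+1)) (2^v *(2*q+1)) \<in> VV m"
  using ndV cen_mem unfolding Nodes_def by blast

lemma he_h: "okc m u p q \<Longrightarrow> i = 1 \<or> i = 3 \<Longrightarrow>
  {nd (2^u*(4*p+2)) (2^u*(4*q+2)), nd (2^u*(4*p+i)) (2^u*(4*q+2))} \<in> EE m"
  unfolding EE_def HE_def by blast
lemma he_v: "okc m u p q \<Longrightarrow> i = 1 \<or> i = 3 \<Longrightarrow> j = 1 \<or> j = 3 \<Longrightarrow>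
  {nd (2^u*(4*p+i)) (2^u*(4*q+2)), nd (2^u*(4*p+i)) (2^u*(4*q+j))} \<in> EE m"
  unfolding EE_def HE_def by blast

lemma okc_parent:
  assumes "2^v *(2*p+1) < (2::nat)^m" "2^v *(2*q+1) < (2::nat)^m" "v + 2 \<le> m"
  shows "okc m v (p div 2) (q div 2)"
proof -
  define K where "K = (2::nat)^(m - v - 2)"
  have mm: "m = v + (2 + (m - v - 2))" using assms(3) by simp
  have "(2::nat)^m = 2^(v + (2 + (m - v - 2)))" using mm by (rule arg_cong)
  also have "\<dots> = 2^v * (4*K)" unfolding K_def by (simp only: power_add) simp
  finally have m: "(2::nat)^m = 2^v * (4*K)" .
  have "2^v *(2*p+1) < (2::nat)^v *(4*K)" using assms(1) unfolding m .
  then have "2*p+1 < 4*K" using mult_less_cancel1 by blast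
  then have "p div 2 < K" by linarith
  then have "4*(p div 2)+4 \<le> 4*K" by linarith
  then have a: "2^v *(4*(p div 2)+4) \<le> (2::nat)^m" unfolding m by (rule mult_le_mono2)
  have "2^v *(2*q+1) < (2::nat)^v *(4*K)" using assms(2) unfolding m .
  then have "2*q+1 < 4*K" using mult_less_cancel1 by blast
  then have "q div 2 < K" by linarith
  then have "4*(q div 2)+4 \<le> 4*K" by linarith
  then have b: "2^v *(4*(q div 2)+4) \<le> (2::nat)^m" unfolding m by (rule mult_le_mono2)
  show ?thesis unfolding okc_def using a b by simp
qed

lemma pow_bound_lt: assumes "2^v *(2*p+1) < (2::nat)^m" shows "v < m"
proof (rule ccontr)
  assume "\<not> v < m"
  then have "(2::nat)^m \<le> 2^v" by simp
  moreover have "(2::nat)^v \<le> 2^v *(2*p+1)" by simp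
  ultimately show False using assms by linarith
qed

lemma cen_reach_aux:
  assumes m1: "1 \<le> m"
  shows "\<forall>v p q. m - 1 - v = d \<longrightarrow> 2^v *(2*p+1) < (2::nat)^m \<longrightarrow> 2^v *(2*q+1) < (2::nat)^m \<longrightarrow>
    dle (VV m) (EE m) (nd (2^(m-1)) (2^(m-1))) (nd (2^v *(2*p+1)) (2^v *(2*q+1))) (2*d)"
proof (induction d)
  case 0
  show ?case
  proof (intro allI impI)
    fix v p q assume a: "m - 1 - v = 0" "2^v *(2*p+1) < (2::nat)^m" "2^v *(2*q+1) < (2::nat)^m"
    have "v < m" using pow_bound_lt a(2) .
    then have v: "v = m - 1" using a(1) by simp
    have mm: "m = Suc (m-1)" using m1 by simp
    have m2: "(2::nat)^m = 2^(m-1) * 2" by (subst mm) simp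
    have "2^(m-1)*(2*p+1) < (2::nat)^(m-1) * 2" using a(2) unfolding v m2 .
    then have "2*p+1 < 2" using mult_less_cancel1 by blast
    then have p: "p = 0" by simp
    have "2^(m-1)*(2*q+1) < (2::nat)^(m-1) * 2" using a(3) unfolding v m2 .
    then have "2*q+1 < 2" using mult_less_cancel1 by blast
    then have q: "q = 0" by simp
    have "nd (2^(m-1)) (2^(m-1)) \<in> VV m" using cen_V[of "m-1" 0 m 0] a(2) v p by simp
    then show "dle (VV m) (EE m) (nd (2^(m-1)) (2^(m-1))) (nd (2^v *(2*p+1)) (2^v *(2*q+1))) (2*0)"
      using dle_refl v p q by simp
  qed
next
  case (Suc d)
  show ?case
  proof (intro allI impI)
    fix v p q assume a: "m - 1 - v = Suc d" "2^v *(2*p+1) < (2::nat)^m" "2^v *(2*q+1) < (2::nat)^m"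
    have v2: "v + 2 \<le> m" using a(1) by simp
    define p' where "p' = p div 2"
    define q' where "q' = q div 2"
    have ok: "okc m v p' q'" unfolding p'_def q'_def by (rule okc_parent[OF a(2,3) v2])
    have e2: "(2::nat)^(Suc v)*(2*p'+1) = 2^v *(4*p'+2)" "(2::nat)^(Suc v)*(2*q'+1) = 2^v *(4*q'+2)" by simp_all
    have b1: "2^(Suc v)*(2*p'+1) < (2::nat)^m" "2^(Suc v)*(2*q'+1) < (2::nat)^m"
      unfolding e2 using okc_bounds[OF ok, of 1] by simp_all
    have "m - 1 - Suc v = d" using a(1) by simp
    have IH: "dle (VV m) (EE m) (nd (2^(m-1)) (2^(m-1))) (nd (2^v *(4*p'+2)) (2^v *(4*q'+2))) (2*d)"
      using Suc.IH[rule_format, OF \<open>m - 1 - Suc v = d\<close> b1] unfolding e2 .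
    define i where "i = (if even p then 1 else (3::nat))"
    define j where "j = (if even q then 1 else (3::nat))"
    have i: "i = 1 \<or> i = 3" "4*p'+i = 2*p+1" unfolding i_def p'_def by presburger+
    have j: "j = 1 \<or> j = 3" "4*q'+j = 2*q+1" unfolding j_def q'_def by presburger+
    have cV: "nd (2^v *(4*p'+2)) (2^v *(4*q'+2)) \<in> VV m" using ndV center_in_cen[OF ok] unfolding Nodes_def by blast
    have bV: "nd (2^v *(4*p'+i)) (2^v *(4*q'+2)) \<in> VV m" using ndV bar_in[OF ok i(1)] unfolding Nodes_def by blast
    have chV: "nd (2^v *(4*p'+i)) (2^v *(4*q'+j)) \<in> VV m" using ndV child_in_cen[OF ok i(1) j(1)] unfolding Nodes_def by blast
    have d1: "dle (VV m) (EE m) (nd (2^v *(4*p'+2)) (2^v *(4*q'+2))) (nd (2^v *(4*p'+i)) (2^v *(4*q'+2))) 1"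
      using dle_edge[OF he_h[OF ok i(1)] cV bV] .
    have d2: "dle (VV m) (EE m) (nd (2^v *(4*p'+i)) (2^v *(4*q'+2))) (nd (2^v *(4*p'+i)) (2^v *(4*q'+j))) 1"
      using dle_edge[OF he_v[OF ok i(1) j(1)] bV chV] .
    have "dle (VV m) (EE m) (nd (2^(m-1)) (2^(m-1))) (nd (2^v *(4*p'+i)) (2^v *(4*q'+j))) (2*d + 1 + 1)"
      using dle_trans[OF dle_trans[OF IH d1] d2] .
    then show "dle (VV m) (EE m) (nd (2^(m-1)) (2^(m-1))) (nd (2^v *(2*p+1)) (2^v *(2*q+1))) (2*Suc d)"
      unfolding i(2) j(2) by simp
  qed
qed

lemma cen_reach:
  assumes "1 \<le> m" "2^v *(2*p+1) < (2::nat)^m" "2^v *(2*q+1) < (2::nat)^m"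
  shows "dle (VV m) (EE m) (nd (2^(m-1)) (2^(m-1))) (nd (2^v *(2*p+1)) (2^v *(2*q+1))) (2*(m-1-v))"
  using cen_reach_aux[OF assms(1), of "m-1-v"] assms(2,3) by blast

lemma odd_below: assumes "x < (2::nat)^m" "1 \<le> m" shows "2*(x div 2)+1 < (2::nat)^m"
proof -
  have mm: "m = Suc (m-1)" using assms(2) by simp
  have K: "(2::nat)^m = 2*2^(m-1)" by (subst mm) simp
  show ?thesis using assms(1) unfolding K by presburger
qed

lemma se_mem: "(a,b) \<in> Nodes m \<Longrightarrow> Suc x = a \<or> x = a \<Longrightarrow> Suc y = b \<or> y = b \<Longrightarrow> {nd a b, gv x y} \<in> EE m"
  unfolding EE_def SE_def by blast

lemma corner: "Suc x = 2*(x div 2)+1 \<or> x = 2*(x div 2)+1" by presburger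

lemma ecc_root:
  assumes m1: "1 \<le> m" and w: "w \<in> VV m"
  shows "dle (VV m) (EE m) (nd (2^(m-1)) (2^(m-1))) w (2*m-1)"
  using w
proof (cases rule: VV_cases)
  case (G x y)
  define a where "a = 2*(x div 2)+1"
  define b where "b = 2*(y div 2)+1"
  have ab: "2^0*(2*(x div 2)+1) < (2::nat)^m" "2^0*(2*(y div 2)+1) < (2::nat)^m"
    using odd_below G(2,3) m1 by simp_all
  have d1: "dle (VV m) (EE m) (nd (2^(m-1)) (2^(m-1))) (nd a b) (2*(m-1-0))"
    using cen_reach[OF m1 ab] unfolding a_def b_def by simp
  have nab: "(a,b) \<in> Nodes m" using cen_mem[OF ab] unfolding Nodes_def a_def b_def by simp
  have "{nd a b, gv x y} \<in> EE m"
    using se_mem[OF nab] corner[of x] corner[of y] unfolding a_def b_def by blast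
  then have d2: "dle (VV m) (EE m) (nd a b) (gv x y) 1" using dle_edge ndV[OF nab] gvV[OF G(2,3)] by metis
  have "dle (VV m) (EE m) (nd (2^(m-1)) (2^(m-1))) (gv x y) (2*(m-1-0) + 1)" using dle_trans[OF d1 d2] .
  then show ?thesis unfolding G(1) using m1 by (elim dle_mono) simp
next
  case (N a b)
  show ?thesis
  proof (cases "(a,b) \<in> Cen m")
    case True
    then obtain v p q where h: "a = 2^v *(2*p+1)" "b = 2^v *(2*q+1)" "2^v *(2*p+1) < (2::nat)^m" "2^v *(2*q+1) < (2::nat)^m"
      unfolding Cen_def by blast
    have "dle (VV m) (EE m) (nd (2^(m-1)) (2^(m-1))) (nd a b) (2*(m-1-v))" using cen_reach[OF m1 h(3,4)] h(1,2) by simp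
    then show ?thesis unfolding N(1) by (elim dle_mono) simp
  next
    case False
    then have "(a,b) \<in> Bar m" using N(2) unfolding Nodes_def by blast
    then obtain u p q i where h: "a = 2^u*(4*p+i)" "b = 2^u*(4*q+2)" "i = 1 \<or> i = 3" "okc m u p q"
      unfolding Bar_def by blast
    have e2: "(2::nat)^(Suc u)*(2*p+1) = 2^u*(4*p+2)" "(2::nat)^(Suc u)*(2*q+1) = 2^u*(4*q+2)" by simp_all
    have b1: "2^(Suc u)*(2*p+1) < (2::nat)^m" "2^(Suc u)*(2*q+1) < (2::nat)^m"
      unfolding e2 using okc_bounds[OF h(4), of 1] by simp_all
    have d1: "dle (VV m) (EE m) (nd (2^(m-1)) (2^(m-1))) (nd (2^u*(4*p+2)) (2^u*(4*q+2))) (2*(m-1-Suc u))"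
      using cen_reach[OF m1 b1] unfolding e2 .
    have cV: "nd (2^u*(4*p+2)) (2^u*(4*q+2)) \<in> VV m" using ndV center_in_cen[OF h(4)] unfolding Nodes_def by blast
    have bV: "nd (2^u*(4*p+i)) (2^u*(4*q+2)) \<in> VV m" using ndV[OF N(2)] h(1,2) by simp
    have d2: "dle (VV m) (EE m) (nd (2^u*(4*p+2)) (2^u*(4*q+2))) (nd a b) 1"
      using dle_edge[OF he_h[OF h(4) h(3)] cV bV] unfolding h(1,2) .
    have "dle (VV m) (EE m) (nd (2^(m-1)) (2^(m-1))) (nd a b) (2*(m-1-Suc u) + 1)" using dle_trans[OF d1 d2] .
    then show ?thesis unfolding N(1) using m1 by (elim dle_mono) simp
  qed
qed

lemma radius_VE:
  assumes m1: "1 \<le> m"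
  shows "graph_radius (VV m) (EE m) \<le> enat (2*m-1)"
proof -
  let ?r = "nd (2^(m-1)) (2^(m-1))"
  have rV: "?r \<in> VV m" using cen_V[of "m-1" 0 m 0] m1 by simp
  have "graph_radius (VV m) (EE m) \<le> (SUP u\<in>VV m. gdist (VV m) (EE m) ?r u)"
    unfolding graph_radius_def by (rule INF_lower[OF rV])
  also have "\<dots> \<le> enat (2*m-1)"
    by (rule SUP_least) (rule gdist_le[OF ecc_root[OF m1]])
  finally show ?thesis .
qed


lemma path_walk:
  assumes "\<forall>k. a \<le> k \<and> k < b \<longrightarrow> {f k, f (Suc k)} \<in> E"
    "\<forall>k. a \<le> k \<and> k \<le> b \<longrightarrow> f k \<in> V \<and> f k \<in> X" "a \<le> b"
  shows "\<exists>xs. walk V E xs \<and> set xs \<subseteq> X \<and> hd xs = f a \<and> last xs = f b"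
  using assms
proof (induction b)
  case 0
  then have "a = 0" by simp
  then show ?case using 0 by (intro exI[of _ "[f 0]"]) auto
next
  case (Suc b)
  show ?case
  proof (cases "a = Suc b")
    case True
    then show ?thesis using Suc.prems by (intro exI[of _ "[f a]"]) auto
  next
    case False
    then have ab: "a \<le> b" using Suc.prems(3) by simp
    obtain xs where xs: "walk V E xs" "set xs \<subseteq> X" "hd xs = f a" "last xs = f b"
      using Suc.IH[OF _ _ ab] Suc.prems(1,2) by fastforce
    have w2: "walk V E [f b, f (Suc b)]" using Suc.prems(1,2) ab by (simp add: walk_Cons2)
    have "walk V E (xs @ tl [f b, f (Suc b)])" using walk_append[OF xs(1) w2] xs(4) by simp
    moreover have "xs \<noteq> []" using xs(1) by (auto simp: walk_def)
    moreover have "f (Suc b) \<in> X" using Suc.prems(2) ab by simp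
    ultimately show ?thesis using xs by (intro exI[of _ "xs @ [f (Suc b)]"]) auto
  qed
qed

lemma path_walk_any:
  assumes "\<forall>k. min a b \<le> k \<and> k < max a b \<longrightarrow> {f k, f (Suc k)} \<in> E"
    "\<forall>k. min a b \<le> k \<and> k \<le> max a b \<longrightarrow> f k \<in> V \<and> f k \<in> X"
  shows "\<exists>xs. walk V E xs \<and> set xs \<subseteq> X \<and> hd xs = f a \<and> last xs = f b"
proof (cases "a \<le> b")
  case True
  then show ?thesis using path_walk[of a b f E V X] assms by (simp add: min_def max_def)
next
  case False
  then obtain xs where xs: "walk V E xs" "set xs \<subseteq> X" "hd xs = f b" "last xs = f a"
    using path_walk[of b a f E V X] assms by (auto simp: min_def max_def)
  then have "xs \<noteq> []" by (auto simp: walk_def)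
  then show ?thesis using xs walk_rev[OF xs(1)] by (intro exI[of _ "rev xs"]) (auto simp: hd_rev last_rev)
qed

lemma ge_h: "Suc x < 2^m \<Longrightarrow> y < 2^m \<Longrightarrow> {gv x y, gv (Suc x) y} \<in> EE m"
  unfolding EE_def GE_def by blast
lemma ge_v: "x < 2^m \<Longrightarrow> Suc y < 2^m \<Longrightarrow> {gv x y, gv x (Suc y)} \<in> EE m"
  unfolding EE_def GE_def by blast

lemma cross_wconn:
  assumes i: "i < (2::nat)^m" and j: "j < (2::nat)^m"
  shows "wconn (VV m) (EE m) ({gv x i | x. x < 2^m} \<union> {gv j y | y. y < 2^m})"
proof -
  let ?X = "{gv x i | x. x < 2^m} \<union> {gv j y | y. y < 2^m}"
  have tc: "\<exists>xs. walk (VV m) (EE m) xs \<and> set xs \<subseteq> ?X \<and> hd xs = u \<and> last xs = gv j i" if u: "u \<in> ?X" for u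
  proof -
    from u consider (r) x where "u = gv x i" "x < 2^m" | (c) y where "u = gv j y" "y < 2^m" by blast
    then show ?thesis
    proof cases
      case r
      have "\<exists>xs. walk (VV m) (EE m) xs \<and> set xs \<subseteq> ?X \<and> hd xs = (\<lambda>k. gv k i) x \<and> last xs = (\<lambda>k. gv k i) j"
      proof (rule path_walk_any[where f="\<lambda>k. gv k i"])
        show "\<forall>k. min x j \<le> k \<and> k < max x j \<longrightarrow> {gv k i, gv (Suc k) i} \<in> EE m"
          using r(2) j i by (auto intro!: ge_h)
        show "\<forall>k. min x j \<le> k \<and> k \<le> max x j \<longrightarrow> gv k i \<in> VV m \<and> gv k i \<in> ?X"
          using r(2) j i by (auto intro!: gvV)
      qed
      then show ?thesis using r(1) by simp
    next
      case c
      have "\<exists>xs. walk (VV m) (EE m) xs \<and> set xs \<subseteq> ?X \<and> hd xs = (\<lambda>k. gv j k) y \<and> last xs = (\<lambda>k. gv j k) i"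
      proof (rule path_walk_any[where f="\<lambda>k. gv j k"])
        show "\<forall>k. min y i \<le> k \<and> k < max y i \<longrightarrow> {gv j k, gv j (Suc k)} \<in> EE m"
          using c(2) j i by (auto intro!: ge_v)
        show "\<forall>k. min y i \<le> k \<and> k \<le> max y i \<longrightarrow> gv j k \<in> VV m \<and> gv j k \<in> ?X"
          using c(2) j i by (auto intro!: gvV)
      qed
      then show ?thesis using c(1) by simp
    qed
  qed
  show ?thesis unfolding wconn_def
  proof (intro ballI)
    fix u v assume u: "u \<in> ?X" and v: "v \<in> ?X"
    obtain xs where xs: "walk (VV m) (EE m) xs" "set xs \<subseteq> ?X" "hd xs = u" "last xs = gv j i" using tc[OF u] by blast
    obtain ys where ys: "walk (VV m) (EE m) ys" "set ys \<subseteq> ?X" "hd ys = v" "last ys = gv j i" using tc[OF v] by blast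
    have ne: "xs \<noteq> []" "ys \<noteq> []" using xs(1) ys(1) by (auto simp: walk_def)
    have w: "walk (VV m) (EE m) (xs @ tl (rev ys))" using walk_append[OF xs(1) walk_rev[OF ys(1)]] xs(4) ys(4) ne
      by (simp add: hd_rev)
    moreover have "set (tl (rev ys)) \<subseteq> set ys"
    proof -
      have "set (tl (rev ys)) \<subseteq> set (rev ys)" by (cases "rev ys") auto
      then show ?thesis by simp
    qed
    then have "set (xs @ tl (rev ys)) \<subseteq> ?X" using xs(2) ys(2) by auto
    moreover have "hd (xs @ tl (rev ys)) = u" using ne xs(3) by simp
    moreover have "last (xs @ tl (rev ys)) = v" using last_append_tl[of xs "rev ys"] ne xs(4) ys(3,4) by (simp add: hd_rev last_rev)
    ultimately show "\<exists>xs. walk (VV m) (EE m) xs \<and> set xs \<subseteq> ?X \<and> hd xs = u \<and> last xs = v" by blast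
  qed
qed

lemma tw_VE: "2^m - 1 \<le> treewidth (VV m) (EE m)"
proof -
  define R where "R i = {gv x i | x. x < (2::nat)^m}" for i
  define C where "C j = {gv j y | y. y < (2::nat)^m}" for j
  show ?thesis
  proof (rule treewidth_lower[OF sgraph_VE, of "2^m" R C])
    show "\<forall>i<2^m. \<forall>j<2^m. R i \<inter> C j \<noteq> {}" unfolding R_def C_def by blast
    show "\<forall>i<2^m. \<forall>j<2^m. i \<noteq> j \<longrightarrow> R i \<inter> R j = {}" unfolding R_def by auto
    show "\<forall>i<2^m. \<forall>j<2^m. i \<noteq> j \<longrightarrow> C i \<inter> C j = {}" unfolding C_def by auto
    show "\<forall>i<2^m. \<forall>j<2^m. wconn (VV m) (EE m) (R i \<union> C j)" unfolding R_def C_def using cross_wconn by blast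
    show "\<forall>i<2^m. R i \<subseteq> VV m \<and> C i \<subseteq> VV m" unfolding R_def C_def using gvV by blast
  qed
qed

lemma arith_pow:
  fixes n k :: nat
  assumes "n \<ge> 1"
  shows "n^(k+1) + 2 \<le> 2^(k*n + (n+1) div 2 + 1)"
proof -
  define h where "h = (n+1) div 2"
  have "n \<le> 2^n" using less_exp[of n] by simp
  then have a0: "n^k \<le> (2^n)^k" using power_mono[of n "2^n" k] by simp
  have "(2::nat)^(k*n) = (2^n)^k" by (metis power_mult mult.commute)
  then have a: "n^k \<le> 2^(k*n)" using a0 by simp
  have "h < 2^h" by (rule less_exp)
  then have "h+1 \<le> 2^h" by (simp add: Suc_le_eq)
  then have "2*(h+1) \<le> 2*2^h" by simp
  then have "2*(h+1) \<le> 2^(h+1)" by simp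
  moreover have "n \<le> 2*h" unfolding h_def by presburger
  moreover have "n + 2 \<le> 2*(h+1)" using \<open>n \<le> 2*h\<close> by simp
  ultimately have b: "n + 2 \<le> 2^(h+1)" using le_trans by blast
  have "n^k * (n+2) \<le> 2^(k*n) * 2^(h+1)" using a b by (rule mult_le_mono)
  also have "\<dots> = 2^(k*n + (n+1) div 2 + 1)" unfolding h_def by (simp add: power_add)
  finally have c: "n^k * (n+2) \<le> 2^(k*n + (n+1) div 2 + 1)" .
  have "1 \<le> n^k" using assms by simp
  then have "n^(k+1) + 2 \<le> n^k * (n+2)" by (simp add: algebra_simps)
  then show ?thesis using c by linarith
qed

lemma lin_aux: "(1::nat) \<le> C \<Longrightarrow> 2*D \<le> n+1 \<Longrightarrow> Q = 2*P + n \<Longrightarrow> 2*(P + D + 1) - 1 \<le> Q + C + 1"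
  by presburger

lemma arith_rad:
  fixes n k :: nat
  assumes "k \<ge> 1"
  shows "2*(k*n + (n+1) div 2 + 1) - 1 \<le> (2 * k + 1) * n + nat \<lceil>real k / 2\<rceil> + 1"
proof -
  have "0 < real k / 2" using assms by simp
  then have "1 \<le> \<lceil>real k / 2\<rceil>" by (simp add: ceiling_le_iff zero_less_ceiling) 
  then have "1 \<le> nat \<lceil>real k / 2\<rceil>" by linarith
  moreover have "2*((n+1) div 2) \<le> n + 1" by simp
  moreover have "(2*k+1)*n = 2*(k*n) + n" by (simp add: algebra_simps)
  ultimately show ?thesis using lin_aux by blast
qed

theorem lemma43:
  fixes n k :: nat
  assumes "n \<ge> 1" and "k \<ge> 1"
  shows "\<exists>(V :: nat set) E. sgraph V E \<and> one_gap_planar V E \<and>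
           treewidth V E \<ge> n ^ (k + 1) + 1 \<and>
           graph_radius V E \<le> enat ((2 * k + 1) * n + nat \<lceil>real k / 2\<rceil> + 1)"
proof -
  define m where "m = k*n + (n+1) div 2 + 1"
  have m1: "1 \<le> m" unfolding m_def by simp
  have tw: "n ^ (k + 1) + 1 \<le> treewidth (VV m) (EE m)"
    using tw_VE[of m] arith_pow[OF assms(1), of k] unfolding m_def by linarith
  have "graph_radius (VV m) (EE m) \<le> enat (2*m-1)" by (rule radius_VE[OF m1])
  also have "\<dots> \<le> enat ((2 * k + 1) * n + nat \<lceil>real k / 2\<rceil> + 1)"
    using arith_rad[OF assms(2), of n] unfolding m_def by simp
  finally have rad: "graph_radius (VV m) (EE m) \<le> enat ((2 * k + 1) * n + nat \<lceil>real k / 2\<rceil> + 1)" .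
  show ?thesis using sgraph_VE one_gap_planar_VE tw rad by blast
qed


end
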